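(* In the setting described in the context, let $\sigma_w,\sigma_v$ be real scalars, suppose $W=\rho I$ for some $\rho>0$, and consider $$\tilde\Sigma_\tau(s)=R^T\big(sI+L_{e,s}^\tau RWR^T\big)^{-1}\begin{bmatrix}\sigma_wD_\tau^TE^{-1/2} & -\sigma_vL_{e,s}^\tau RW^{1/2}\end{bmatrix}.$$ Then $$\|\tilde\Sigma_\tau\|_\infty^2=\frac{1}{\rho^2}\sigma_w^2\,\bar\sigma\big(R^T(RR^TL_{e,s}^\tau RR^T)^{-1}R\big)+\frac{1}{\rho}\sigma_v^2.$$
   Context: Let $\mathcal G$ be an undirected, connected graph without self-loops, with node set $\{1,\dots,n\}$ ($n\ge2$) and edge set $\mathcal E$, $m=|\mathcal E|$. Give each edge an arbitrary orientation; the incidence matrix $D\in\mathbb R^{n\times m}$ has $D_{il}=1$ if node $i$ is the initial node of edge $l$, $-1$ if it is the terminal node, and $0$ otherwise. Fix a spanning tree $\mathcal G_\tau$ and order the edges so the first $n-1$ are tree edges; write $D=[D_\tau\ D_c]$ with $D_\tau\in\mathbb R^{n\times(n-1)}$. Set $T_\tau^c=(D_\tau^TD_\tau)^{-1}D_\tau^TD_c$ and $R=[I_{n-1}\ T_\tau^c]\in\mathbb R^{(n-1)\times m}$. $W\in\mathbb R^{m\times m}$ is the (diagonal, positive) edge-weight matrix and $E=\mathrm{diag}(\epsilon_1,\dots,\epsilon_n)$, $\epsilon_i>0$, is the time-scale matrix; powers of diagonal matrices are taken entrywise. Define $L_{e,s}^\tau=D_\tau^TE^{-1}D_\tau$. For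 a stable transfer matrix $\Phi(s)$, $\|\Phi\|_\infty=\sup_{\omega\in\mathbb R}\bar\sigma(\Phi(j\omega))$ where $\bar\sigma$ is the largest singular value. *)

theory Defs
  imports "Jordan_Normal_Form.Jordan_Normal_Form_Existence" "Jordan_Normal_Form.Schur_Decomposition"
begin

text \<open>Nodes are 0,...,n-1 (0-indexed). The graph is given by a list es of m oriented edges
 (initial node, terminal node); the first n-1 edges are the spanning-tree edges.\<close>

definition edge_rel :: "(nat \<times> nat) list \<Rightarrow> (nat \<times> nat) set" where
  "edge_rel es = {(a,b). (a,b) \<in> set es \<or> (b,a) \<in> set es}"

definition valid_graph_with_tree :: "nat \<Rightarrow> (nat \<times> nat) list \<Rightarrow> bool" where
  "valid_graph_with_tree n es \<longleftrightarrow>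
     2 \<le> n \<and> n - 1 \<le> length es \<and>
     (\<forall>l < length es. fst (es!l) < n \<and> snd (es!l) < n \<and> fst (es!l) \<noteq> snd (es!l)) \<and>
     (\<forall>l < length es. \<forall>l' < length es. l \<noteq> l' \<longrightarrow>
         {fst (es!l), snd (es!l)} \<noteq> {fst (es!l'), snd (es!l')}) \<and>
     (\<forall>i < n. (0, i) \<in> (edge_rel (take (n - 1) es))\<^sup>*)"

definition incidence :: "nat \<Rightarrow> (nat \<times> nat) list \<Rightarrow> real mat" where
  "incidence n es = mat n (length es) (\<lambda>(i,l).
      if i = fst (es!l) then 1 else if i = snd (es!l) then -1 else 0)"

definition D_tree :: "nat \<Rightarrow> (nat \<times> nat) list \<Rightarrow> real mat" where
  "D_tree n es = mat n (n - 1) (\<lambda>(i,l). incidence n es $$ (i,l))"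

definition D_cotree :: "nat \<Rightarrow> (nat \<times> nat) list \<Rightarrow> real mat" where
  "D_cotree n es = mat n (length es - (n - 1)) (\<lambda>(i,l). incidence n es $$ (i, l + (n - 1)))"

definition minv :: "'a::field mat \<Rightarrow> 'a mat" where
  "minv A = (SOME B. B \<in> carrier_mat (dim_row A) (dim_row A) \<and>
                     A * B = 1\<^sub>m (dim_row A) \<and> B * A = 1\<^sub>m (dim_row A))"

definition T_tau :: "nat \<Rightarrow> (nat \<times> nat) list \<Rightarrow> real mat" where
  "T_tau n es = minv ((D_tree n es)\<^sup>T * D_tree n es) * (D_tree n es)\<^sup>T * D_cotree n es"

definition R_mat :: "nat \<Rightarrow> (nat \<times> nat) list \<Rightarrow> real mat" where
  "R_mat n es = mat (n - 1) (length es) (\<lambda>(i,l).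
      if l < n - 1 then (if i = l then 1 else 0) else T_tau n es $$ (i, l - (n - 1)))"

definition diagm :: "nat \<Rightarrow> (nat \<Rightarrow> 'a::zero) \<Rightarrow> 'a mat" where
  "diagm k d = mat k k (\<lambda>(i,j). if i = j then d i else 0)"

definition diag_powr :: "real mat \<Rightarrow> real \<Rightarrow> real mat" where
  "diag_powr A p = diagm (dim_row A) (\<lambda>i. (A $$ (i,i)) powr p)"

definition L_es :: "nat \<Rightarrow> (nat \<times> nat) list \<Rightarrow> real mat \<Rightarrow> real mat" where
  "L_es n es E = (D_tree n es)\<^sup>T * minv E * D_tree n es"

definition sigma_max :: "complex mat \<Rightarrow> real" where
  "sigma_max A = sqrt (Max {Re k | k. eigenvalue (mat_adjoint A * A) k})"

definition sigma_max_real :: "real mat \<Rightarrow> real" where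
  "sigma_max_real A = sigma_max (map_mat complex_of_real A)"

definition hinf_norm :: "(complex \<Rightarrow> complex mat) \<Rightarrow> real" where
  "hinf_norm Phi = (SUP \<omega>::real. sigma_max (Phi (\<i> * complex_of_real \<omega>)))"

definition cmat :: "real mat \<Rightarrow> complex mat" where
  "cmat A = map_mat complex_of_real A"

text \<open>Sigma_tilde_tau(s) = R^T (sI + L R W R^T)^{-1} [sigma_w D_tau^T E^{-1/2} , - sigma_v L R W^{1/2}]\<close>
definition Sigma_tilde :: "nat \<Rightarrow> (nat \<times> nat) list \<Rightarrow> real mat \<Rightarrow> real mat \<Rightarrow> real \<Rightarrow> real
     \<Rightarrow> complex \<Rightarrow> complex mat" where
  "Sigma_tilde n es W E sw sv s =
     (let R = R_mat n es; L = L_es n es E;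
          B = four_block_mat (sw \<cdot>\<^sub>m ((D_tree n es)\<^sup>T * diag_powr E (-1/2)))
                             (- sv \<cdot>\<^sub>m (L * R * diag_powr W (1/2)))
                             (0\<^sub>m 0 n) (0\<^sub>m 0 (length es))
      in cmat R\<^sup>T * minv (s \<cdot>\<^sub>m 1\<^sub>m (n - 1) + cmat (L * R * W * R\<^sup>T)) * cmat B)"

end

theory Submission
  imports Defs "Jordan_Normal_Form.Spectral_Radius"
begin


lemma conj_cpx[simp]: "conjugate (z::complex) = cnj z" by simp

definition adj :: "complex mat \<Rightarrow> complex mat" where
  "adj A = mat (dim_col A) (dim_row A) (\<lambda>(i,j). cnj (A $$ (j,i)))"

lemma adj_dims[simp]: "dim_row (adj A) = dim_col A" "dim_col (adj A) = dim_row A"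
  unfolding adj_def by auto

lemma adj_carrier[simp]: "A \<in> carrier_mat p q \<Longrightarrow> adj A \<in> carrier_mat q p"
  unfolding adj_def by auto

lemma adj_index[simp]: "i < dim_col A \<Longrightarrow> j < dim_row A \<Longrightarrow> adj A $$ (i,j) = cnj (A $$ (j,i))"
  unfolding adj_def by auto

lemma mat_adjoint_adj: "mat_adjoint A = adj A"
  unfolding mat_adjoint_def adj_def by (rule eq_matI) (auto simp: mat_of_rows_def)

lemma adj_adj[simp]: "adj (adj A) = A"
  by (rule eq_matI) auto

lemma adj_mult: assumes "A \<in> carrier_mat p q" "B \<in> carrier_mat q r"
  shows "adj (A * B) = adj B * adj A"
  using assms by (intro eq_matI) (auto simp: scalar_prod_def cnj_sum mult.commute intro!: sum.cong)

lemma adj_cmat: "adj (cmat A) = cmat (A\<^sup>T)"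
  unfolding cmat_def by (rule eq_matI) auto

lemma adj_add: assumes "A \<in> carrier_mat p q" "B \<in> carrier_mat p q"
  shows "adj (A + B) = adj A + adj B"
  using assms by (intro eq_matI) auto

lemma adj_smult: "adj (c \<cdot>\<^sub>m A) = cnj c \<cdot>\<^sub>m adj A"
  by (intro eq_matI) auto

lemma adj_one[simp]: "adj (1\<^sub>m k) = 1\<^sub>m k"
  by (intro eq_matI) auto

lemma ip_adj: assumes A: "A \<in> carrier_mat p q" and x: "x \<in> carrier_vec q" and y: "y \<in> carrier_vec p"
  shows "(A *\<^sub>v x) \<bullet>c y = x \<bullet>c (adj A *\<^sub>v y)"
proof -
  have "(A *\<^sub>v x) \<bullet>c y = (\<Sum>i<p. (\<Sum>j<q. A $$ (i,j) * x $ j) * cnj (y $ i))"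
    using A x y by (auto simp: scalar_prod_def lessThan_atLeast0)
  also have "\<dots> = (\<Sum>i<p. \<Sum>j<q. x $ j * (A $$ (i,j) * cnj (y $ i)))"
    unfolding sum_distrib_right by (simp add: mult_ac)
  also have "\<dots> = (\<Sum>j<q. \<Sum>i<p. x $ j * (A $$ (i,j) * cnj (y $ i)))"
    by (rule sum.swap)
  also have "\<dots> = x \<bullet>c (adj A *\<^sub>v y)"
    using A x y by (auto simp: scalar_prod_def lessThan_atLeast0 cnj_sum sum_distrib_left intro!: sum.cong)
  finally show ?thesis .
qed

lemma ip_add_left: fixes x :: "complex vec" assumes "x \<in> carrier_vec n" "y \<in> carrier_vec n" "z \<in> carrier_vec n"
  shows "(x + y) \<bullet>c z = x \<bullet>c z + y \<bullet>c z"
  using assms by (auto simp: scalar_prod_def distrib_right sum.distrib)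

lemma ip_add_right: fixes x :: "complex vec" assumes "x \<in> carrier_vec n" "y \<in> carrier_vec n" "z \<in> carrier_vec n"
  shows "x \<bullet>c (y + z) = x \<bullet>c y + x \<bullet>c z"
  using assms by (auto simp: scalar_prod_def distrib_left sum.distrib)

lemma ip_minus_left: fixes x :: "complex vec" assumes "x \<in> carrier_vec n" "y \<in> carrier_vec n" "z \<in> carrier_vec n"
  shows "(x - y) \<bullet>c z = x \<bullet>c z - y \<bullet>c z"
  using assms by (auto simp: scalar_prod_def left_diff_distrib sum_subtractf)

lemma ip_minus_right: fixes x :: "complex vec" assumes "x \<in> carrier_vec n" "y \<in> carrier_vec n" "z \<in> carrier_vec n"
  shows "x \<bullet>c (y - z) = x \<bullet>c y - x \<bullet>c z"
  using assms by (auto simp: scalar_prod_def right_diff_distrib sum_subtractf)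

lemma ip_smult_left: fixes x :: "complex vec" assumes "x \<in> carrier_vec n" "y \<in> carrier_vec n"
  shows "(c \<cdot>\<^sub>v x) \<bullet>c y = c * (x \<bullet>c y)"
  using assms by (auto simp: scalar_prod_def sum_distrib_left mult_ac)

lemma ip_smult_right: fixes x :: "complex vec" assumes "x \<in> carrier_vec n" "y \<in> carrier_vec n"
  shows "x \<bullet>c (c \<cdot>\<^sub>v y) = cnj c * (x \<bullet>c y)"
  using assms by (auto simp: scalar_prod_def sum_distrib_left mult_ac)

lemma ip_sym: assumes "x \<in> carrier_vec n" "y \<in> carrier_vec n"
  shows "y \<bullet>c x = cnj (x \<bullet>c (y::complex vec))"
  using assms by (auto simp: scalar_prod_def cnj_sum mult_ac)

definition nrm2 :: "complex vec \<Rightarrow> real" where "nrm2 x = Re (x \<bullet>c x)"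

lemma ip_self_sum: "x \<bullet>c x = of_real (\<Sum>i<dim_vec x. (cmod (x $ i))\<^sup>2)"
proof -
  have "x \<bullet>c x = (\<Sum>i<dim_vec x. x $ i * cnj (x $ i))"
    by (simp add: scalar_prod_def lessThan_atLeast0)
  also have "\<dots> = (\<Sum>i<dim_vec x. of_real ((cmod (x $ i))\<^sup>2))"
    by (intro sum.cong refl) (metis complex_norm_square)
  finally show ?thesis by (simp add: of_real_sum)
qed

lemma ip_self_real: "x \<bullet>c x = of_real (nrm2 x)"
  unfolding nrm2_def ip_self_sum by simp

lemma nrm2_sum: "nrm2 x = (\<Sum>i<dim_vec x. (cmod (x $ i))\<^sup>2)"
  unfolding nrm2_def ip_self_sum by simp

lemma nrm2_ge0: "nrm2 x \<ge> 0"
  unfolding nrm2_sum by (auto intro: sum_nonneg)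

lemma nrm2_eq0: assumes "x \<in> carrier_vec n" shows "nrm2 x = 0 \<longleftrightarrow> x = 0\<^sub>v n"
proof -
  have "nrm2 x = 0 \<longleftrightarrow> x \<bullet>c x = 0" unfolding ip_self_real by simp
  also have "\<dots> \<longleftrightarrow> x = 0\<^sub>v n" using conjugate_square_eq_0_vec[OF assms] .
  finally show ?thesis .
qed

lemma comp_le_nrm: assumes "j < dim_vec x" shows "cmod (x $ j) \<le> sqrt (nrm2 x)"
proof -
  have "(cmod (x $ j))\<^sup>2 \<le> (\<Sum>i<dim_vec x. (cmod (x $ i))\<^sup>2)"
    by (rule member_le_sum) (use assms in auto)
  thus ?thesis unfolding nrm2_sum by (simp add: real_le_rsqrt)
qed

definition fnorm :: "complex mat \<Rightarrow> real" where
  "fnorm A = (\<Sum>i<dim_row A. \<Sum>j<dim_col A. cmod (A $$ (i,j)))"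

lemma fnorm_ge0: "fnorm A \<ge> 0" unfolding fnorm_def by (auto intro!: sum_nonneg)

lemma ip_bound: assumes A: "A \<in> carrier_mat p q" and x: "x \<in> carrier_vec q" and y: "y \<in> carrier_vec p"
  shows "cmod ((A *\<^sub>v x) \<bullet>c y) \<le> fnorm A * sqrt (nrm2 x) * sqrt (nrm2 y)"
proof -
  have "(A *\<^sub>v x) \<bullet>c y = (\<Sum>i<p. \<Sum>j<q. A $$ (i,j) * x $ j * cnj (y $ i))"
    using A x y by (auto simp: scalar_prod_def lessThan_atLeast0 sum_distrib_right)
  hence "cmod ((A *\<^sub>v x) \<bullet>c y) \<le> (\<Sum>i<p. cmod (\<Sum>j<q. A $$ (i,j) * x $ j * cnj (y $ i)))"
    by (simp add: norm_sum)
  also have "\<dots> \<le> (\<Sum>i<p. \<Sum>j<q. cmod (A $$ (i,j) * x $ j * cnj (y $ i)))"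
    by (intro sum_mono norm_sum)
  also have "\<dots> \<le> (\<Sum>i<p. \<Sum>j<q. cmod (A $$ (i,j)) * (sqrt (nrm2 x) * sqrt (nrm2 y)))"
  proof (intro sum_mono)
    fix i j assume i: "i \<in> {..<p}" and j: "j \<in> {..<q}"
    have "cmod (x $ j) \<le> sqrt (nrm2 x)" using comp_le_nrm[of j x] x j by auto
    moreover have "cmod (y $ i) \<le> sqrt (nrm2 y)" using comp_le_nrm[of i y] y i by auto
    ultimately have "cmod (x $ j) * cmod (y $ i) \<le> sqrt (nrm2 x) * sqrt (nrm2 y)"
      by (intro mult_mono) (auto simp: nrm2_ge0)
    thus "cmod (A $$ (i,j) * x $ j * cnj (y $ i)) \<le> cmod (A $$ (i,j)) * (sqrt (nrm2 x) * sqrt (nrm2 y))"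
      by (simp add: norm_mult mult.assoc mult_left_mono)
  qed
  also have "\<dots> = fnorm A * sqrt (nrm2 x) * sqrt (nrm2 y)"
    using A by (simp add: fnorm_def sum_distrib_right mult.assoc)
  finally show ?thesis .
qed


lemma Rq_bound: assumes H: "H \<in> carrier_mat p p" and y: "y \<in> carrier_vec p"
  shows "Re ((H *\<^sub>v y) \<bullet>c y) \<le> fnorm H * nrm2 y"
proof -
  have "Re ((H *\<^sub>v y) \<bullet>c y) \<le> cmod ((H *\<^sub>v y) \<bullet>c y)" by (rule complex_Re_le_cmod)
  also have "\<dots> \<le> fnorm H * sqrt (nrm2 y) * sqrt (nrm2 y)" by (rule ip_bound[OF H y y])
  also have "\<dots> = fnorm H * nrm2 y" using nrm2_ge0[of y] by (simp add: mult.assoc)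
  finally show ?thesis .
qed

lemma nrm2_mult_bound: assumes B: "B \<in> carrier_mat p q" and w: "w \<in> carrier_vec q"
  shows "nrm2 (B *\<^sub>v w) \<le> (fnorm B)\<^sup>2 * nrm2 w"
proof -
  let ?u = "B *\<^sub>v w"
  have u: "?u \<in> carrier_vec p" using B w by auto
  have "nrm2 ?u \<le> cmod (?u \<bullet>c ?u)" unfolding nrm2_def by (rule complex_Re_le_cmod)
  also have "\<dots> \<le> fnorm B * sqrt (nrm2 w) * sqrt (nrm2 ?u)" by (rule ip_bound[OF B w u])
  finally have 1: "nrm2 ?u \<le> fnorm B * sqrt (nrm2 w) * sqrt (nrm2 ?u)" .
  show ?thesis
  proof (cases "nrm2 ?u = 0")
    case True thus ?thesis using nrm2_ge0[of w] by simp
  next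
    case False
    hence pos: "sqrt (nrm2 ?u) > 0" using nrm2_ge0[of ?u] by simp
    have "sqrt (nrm2 ?u) * sqrt (nrm2 ?u) = nrm2 ?u" using nrm2_ge0[of ?u] by simp
    hence "sqrt (nrm2 ?u) * sqrt (nrm2 ?u) \<le> (fnorm B * sqrt (nrm2 w)) * sqrt (nrm2 ?u)"
      using 1 by simp
    hence 2: "sqrt (nrm2 ?u) \<le> fnorm B * sqrt (nrm2 w)" using pos by (rule mult_right_le_imp_le)
    have "nrm2 ?u = (sqrt (nrm2 ?u))\<^sup>2" using nrm2_ge0[of ?u] by simp
    also have "\<dots> \<le> (fnorm B * sqrt (nrm2 w))\<^sup>2" using 2 pos by (intro power_mono) auto
    also have "\<dots> = (fnorm B)\<^sup>2 * nrm2 w" using nrm2_ge0[of w] by (simp add: power_mult_distrib)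
    finally show ?thesis .
  qed
qed

lemma ip_smult_both: fixes x :: "complex vec" assumes x: "x \<in> carrier_vec n" and y: "y \<in> carrier_vec n"
  shows "(a \<cdot>\<^sub>v x) \<bullet>c (a \<cdot>\<^sub>v y) = of_real ((cmod a)\<^sup>2) * (x \<bullet>c y)"
proof -
  have ay: "a \<cdot>\<^sub>v y \<in> carrier_vec n" using y by simp
  have "(a \<cdot>\<^sub>v x) \<bullet>c (a \<cdot>\<^sub>v y) = a * (x \<bullet>c (a \<cdot>\<^sub>v y))" by (rule ip_smult_left[OF x ay])
  also have "x \<bullet>c (a \<cdot>\<^sub>v y) = cnj a * (x \<bullet>c y)" by (rule ip_smult_right[OF x y])
  also have "a * (cnj a * (x \<bullet>c y)) = (a * cnj a) * (x \<bullet>c y)" by (rule mult.assoc[symmetric])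
  also have "a * cnj a = of_real ((cmod a)\<^sup>2)" by (simp only: complex_norm_square)
  finally show ?thesis .
qed

lemma nrm2_smult: assumes x: "x \<in> carrier_vec n"
  shows "nrm2 (a \<cdot>\<^sub>v x) = (cmod a)\<^sup>2 * nrm2 x"
  unfolding nrm2_def ip_smult_both[OF x x] by (simp add: ip_self_real)

lemma Rq_smult: assumes H: "H \<in> carrier_mat p p" and y: "y \<in> carrier_vec p"
  shows "(H *\<^sub>v (a \<cdot>\<^sub>v y)) \<bullet>c (a \<cdot>\<^sub>v y) = of_real ((cmod a)\<^sup>2) * ((H *\<^sub>v y) \<bullet>c y)"
proof -
  have Hy: "H *\<^sub>v y \<in> carrier_vec p" using H y by simp
  show ?thesis unfolding mult_mat_vec[OF H y] by (rule ip_smult_both[OF Hy y])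
qed

lemma psd_cs:
  assumes A: "A \<in> carrier_mat p p"
    and herm: "\<And>x y. x \<in> carrier_vec p \<Longrightarrow> y \<in> carrier_vec p \<Longrightarrow> (A *\<^sub>v x) \<bullet>c y = x \<bullet>c (A *\<^sub>v y)"
    and psd: "\<And>z. z \<in> carrier_vec p \<Longrightarrow> Re ((A *\<^sub>v z) \<bullet>c z) \<ge> 0"
    and c: "c > 0" "\<And>w. w \<in> carrier_vec p \<Longrightarrow> Re ((A *\<^sub>v w) \<bullet>c w) \<le> c * nrm2 w"
    and y: "y \<in> carrier_vec p"
  shows "nrm2 (A *\<^sub>v y) \<le> c * Re ((A *\<^sub>v y) \<bullet>c y)"
proof -
  define w where "w = A *\<^sub>v y"
  define t where "t = 1 / c"
  have w: "w \<in> carrier_vec p" using A y unfolding w_def by auto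
  have Aw: "A *\<^sub>v w \<in> carrier_vec p" using A w by auto
  define z where "z = y - of_real t \<cdot>\<^sub>v w"
  have z: "z \<in> carrier_vec p" using y w unfolding z_def by auto
  have Az: "A *\<^sub>v z = w - of_real t \<cdot>\<^sub>v (A *\<^sub>v w)"
    unfolding z_def using mult_minus_distrib_mat_vec[OF A y, of "of_real t \<cdot>\<^sub>v w"] w mult_mat_vec[OF A w]
    by (simp add: w_def)
  have tw: "of_real t \<cdot>\<^sub>v w \<in> carrier_vec p" "of_real t \<cdot>\<^sub>v (A *\<^sub>v w) \<in> carrier_vec p"
    using w Aw by auto
  have "(A *\<^sub>v z) \<bullet>c z = (w - of_real t \<cdot>\<^sub>v (A *\<^sub>v w)) \<bullet>c (y - of_real t \<cdot>\<^sub>v w)"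
    unfolding Az by (simp add: z_def)
  also have "\<dots> = w \<bullet>c (y - of_real t \<cdot>\<^sub>v w) - (of_real t \<cdot>\<^sub>v (A *\<^sub>v w)) \<bullet>c (y - of_real t \<cdot>\<^sub>v w)"
    by (rule ip_minus_left[OF w tw(2)]) (use y tw in auto)
  also have "w \<bullet>c (y - of_real t \<cdot>\<^sub>v w) = w \<bullet>c y - w \<bullet>c (of_real t \<cdot>\<^sub>v w)"
    by (rule ip_minus_right[OF w y tw(1)])
  also have "(of_real t \<cdot>\<^sub>v (A *\<^sub>v w)) \<bullet>c (y - of_real t \<cdot>\<^sub>v w)
     = (of_real t \<cdot>\<^sub>v (A *\<^sub>v w)) \<bullet>c y - (of_real t \<cdot>\<^sub>v (A *\<^sub>v w)) \<bullet>c (of_real t \<cdot>\<^sub>v w)"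
    by (rule ip_minus_right[OF tw(2) y tw(1)])
  also have "w \<bullet>c (of_real t \<cdot>\<^sub>v w) = of_real t * (w \<bullet>c w)"
    using ip_smult_right[OF w w, of "of_real t"] by simp
  also have "(of_real t \<cdot>\<^sub>v (A *\<^sub>v w)) \<bullet>c y = of_real t * ((A *\<^sub>v w) \<bullet>c y)"
    by (rule ip_smult_left[OF Aw y])
  also have "(of_real t \<cdot>\<^sub>v (A *\<^sub>v w)) \<bullet>c (of_real t \<cdot>\<^sub>v w) = of_real t * (of_real t * ((A *\<^sub>v w) \<bullet>c w))"
    using ip_smult_left[OF Aw tw(1), of "of_real t"] ip_smult_right[OF Aw w, of "of_real t"] by simp
  also have "(A *\<^sub>v w) \<bullet>c y = w \<bullet>c w" using herm[OF w y] unfolding w_def by simp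
  finally have e: "(A *\<^sub>v z) \<bullet>c z = w \<bullet>c y - 2 * of_real t * (w \<bullet>c w) + of_real t * of_real t * ((A *\<^sub>v w) \<bullet>c w)"
    by (simp add: algebra_simps)
  have "0 \<le> Re ((A *\<^sub>v z) \<bullet>c z)" by (rule psd[OF z])
  also have "\<dots> = Re (w \<bullet>c y) - 2 * t * nrm2 w + t * t * Re ((A *\<^sub>v w) \<bullet>c w)"
    unfolding e by (simp add: nrm2_def)
  also have "Re ((A *\<^sub>v w) \<bullet>c w) \<le> c * nrm2 w"
    by (rule c(2)[OF w])
  hence "t * t * Re ((A *\<^sub>v w) \<bullet>c w) \<le> t * t * (c * nrm2 w)" by (intro mult_left_mono) auto
  finally have "0 \<le> Re (w \<bullet>c y) - 2 * t * nrm2 w + t * t * (c * nrm2 w)" by simp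
  also have "t * t * (c * nrm2 w) = t * nrm2 w" unfolding t_def using c by (simp add: field_simps power2_eq_square)
  finally have "t * nrm2 w \<le> Re (w \<bullet>c y)" by simp
  hence "c * (t * nrm2 w) \<le> c * Re (w \<bullet>c y)" using c by (intro mult_left_mono) auto
  thus ?thesis unfolding t_def w_def using c by simp
qed


lemma smult_one_mat_vec: "(y::complex vec) \<in> carrier_vec p \<Longrightarrow> (c \<cdot>\<^sub>m 1\<^sub>m p) *\<^sub>v y = c \<cdot>\<^sub>v y"
  by auto

lemma nrm2_unit: assumes "p > 0" shows "nrm2 (unit_vec p 0) = 1"
proof -
  have "nrm2 (unit_vec p 0) = (\<Sum>i<p. (cmod (unit_vec p 0 $ i))\<^sup>2)" by (simp add: nrm2_sum)
  also have "\<dots> = (\<Sum>i<p. if i = 0 then 1 else 0)" by (rule sum.cong) (use assms in auto)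
  also have "\<dots> = 1" using assms by simp
  finally show ?thesis .
qed

lemma nrm2_zero[simp]: "nrm2 (0\<^sub>v p) = 0"
  by (simp add: nrm2_sum)

lemma hermitian_top_eig:
  assumes H: "H \<in> carrier_mat p p"
    and herm: "\<And>x y. x \<in> carrier_vec p \<Longrightarrow> y \<in> carrier_vec p \<Longrightarrow> (H *\<^sub>v x) \<bullet>c y = x \<bullet>c (H *\<^sub>v y)"
    and p: "p > 0"
  shows "\<exists>lam v. v \<in> carrier_vec p \<and> v \<noteq> 0\<^sub>v p \<and> H *\<^sub>v v = of_real lam \<cdot>\<^sub>v v \<and>
     (\<forall>y \<in> carrier_vec p. Re ((H *\<^sub>v y) \<bullet>c y) \<le> lam * nrm2 y)"
proof -
  define Rq where "Rq y = Re ((H *\<^sub>v y) \<bullet>c y)" for y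
  define S where "S = {Rq y | y. y \<in> carrier_vec p \<and> nrm2 y = 1}"
  have Sne: "S \<noteq> {}" unfolding S_def using nrm2_unit[OF p] unit_vec_carrier[of p 0] by blast
  have Sbdd: "bdd_above S" unfolding S_def bdd_above_def
    using Rq_bound[OF H] unfolding Rq_def by (intro exI[of _ "fnorm H"]) force
  define rs where "rs = Sup S"
  have upper: "Rq y \<le> rs" if "y \<in> carrier_vec p" "nrm2 y = 1" for y
    unfolding rs_def by (rule cSup_upper[OF _ Sbdd]) (use that in \<open>auto simp: S_def\<close>)
  have ray: "Rq y \<le> rs * nrm2 y" if y: "y \<in> carrier_vec p" for y
  proof (cases "nrm2 y = 0")
    case True
    hence "y = 0\<^sub>v p" using nrm2_eq0[OF y] by simp
    thus ?thesis unfolding Rq_def using H by simp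
  next
    case False
    define c where "c = sqrt (nrm2 y)"
    have c: "c > 0" using False nrm2_ge0[of y] unfolding c_def by simp
    have cc: "c\<^sup>2 = nrm2 y" unfolding c_def using nrm2_ge0[of y] by simp
    define u where "u = of_real (1 / c) \<cdot>\<^sub>v y"
    have u: "u \<in> carrier_vec p" using y unfolding u_def by simp
    have "nrm2 u = (1/c)\<^sup>2 * nrm2 y" unfolding u_def nrm2_smult[OF y] using c by (simp add: norm_divide)
    hence nu: "nrm2 u = 1" using c cc False by (simp add: field_simps)
    have "Rq u = (1/c)\<^sup>2 * Rq y" unfolding Rq_def u_def Rq_smult[OF H y] using c by (simp add: norm_divide)
    with upper[OF u nu] have "(1/c)\<^sup>2 * Rq y \<le> rs" by simp
    hence "Rq y \<le> rs * c\<^sup>2" using c by (simp add: field_simps)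
    thus ?thesis using cc by simp
  qed
  define A where "A = of_real rs \<cdot>\<^sub>m 1\<^sub>m p - H"
  have A: "A \<in> carrier_mat p p" unfolding A_def by (rule minus_carrier_mat[OF H])
  have Av: "A *\<^sub>v y = of_real rs \<cdot>\<^sub>v y - H *\<^sub>v y" if y: "y \<in> carrier_vec p" for y
    unfolding A_def using minus_mult_distrib_mat_vec[OF _ H y, of "of_real rs \<cdot>\<^sub>m 1\<^sub>m p"] y
    by (simp add: smult_one_mat_vec)
  have AyRe: "Re ((A *\<^sub>v y) \<bullet>c y) = rs * nrm2 y - Rq y" if y: "y \<in> carrier_vec p" for y
  proof -
    have Hy: "H *\<^sub>v y \<in> carrier_vec p" using H y by simp
    have "(A *\<^sub>v y) \<bullet>c y = (of_real rs \<cdot>\<^sub>v y) \<bullet>c y - (H *\<^sub>v y) \<bullet>c y"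
      unfolding Av[OF y] by (rule ip_minus_left[of _ p]) (use y Hy in auto)
    also have "(of_real rs \<cdot>\<^sub>v y) \<bullet>c y = of_real rs * (y \<bullet>c y)" by (rule ip_smult_left[OF y y])
    finally show ?thesis unfolding Rq_def nrm2_def by simp
  qed
  have Aherm: "(A *\<^sub>v x) \<bullet>c y = x \<bullet>c (A *\<^sub>v y)" if x: "x \<in> carrier_vec p" and y: "y \<in> carrier_vec p" for x y
  proof -
    have Hy: "H *\<^sub>v y \<in> carrier_vec p" "H *\<^sub>v x \<in> carrier_vec p" using H x y by auto
    have 1: "(A *\<^sub>v x) \<bullet>c y = (of_real rs \<cdot>\<^sub>v x) \<bullet>c y - (H *\<^sub>v x) \<bullet>c y"
      unfolding Av[OF x] by (rule ip_minus_left[of _ p]) (use x y Hy in auto)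
    have 2: "(of_real rs \<cdot>\<^sub>v x) \<bullet>c y = of_real rs * (x \<bullet>c y)" by (rule ip_smult_left[OF x y])
    have 3: "x \<bullet>c (A *\<^sub>v y) = x \<bullet>c (of_real rs \<cdot>\<^sub>v y) - x \<bullet>c (H *\<^sub>v y)"
      unfolding Av[OF y] by (rule ip_minus_right[of _ p]) (use x y Hy in auto)
    have 4: "x \<bullet>c (of_real rs \<cdot>\<^sub>v y) = cnj (of_real rs) * (x \<bullet>c y)" by (rule ip_smult_right[OF x y])
    show ?thesis unfolding 1 2 3 4 using herm[OF x y] by simp
  qed
  have Apsd: "Re ((A *\<^sub>v z) \<bullet>c z) \<ge> 0" if z: "z \<in> carrier_vec p" for z
    using AyRe[OF z] ray[OF z] by simp
  show ?thesis
  proof (cases "det A = 0")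
    case True
    then obtain v where v: "v \<in> carrier_vec p" "v \<noteq> 0\<^sub>v p" "A *\<^sub>v v = 0\<^sub>v p"
      using det_0_iff_vec_prod_zero[OF A] by auto
    have Hv: "H *\<^sub>v v = of_real rs \<cdot>\<^sub>v v"
    proof (rule eq_vecI)
      fix i assume i: "i < dim_vec (of_real rs \<cdot>\<^sub>v v)"
      hence i': "i < p" using v by simp
      have "(of_real rs \<cdot>\<^sub>v v - H *\<^sub>v v) $ i = 0" using v(3) Av[OF v(1)] i' by simp
      thus "(H *\<^sub>v v) $ i = (of_real rs \<cdot>\<^sub>v v) $ i" using i' v(1) H by simp
    qed (use H v in auto)
    show ?thesis
      by (rule exI[of _ rs], rule exI[of _ v]) (use v Hv ray in \<open>auto simp: Rq_def\<close>)
  next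
    case False
    from det_non_zero_imp_unit[OF A False, of undefined]
    obtain B where B: "B \<in> carrier_mat p p" and BA: "B * A = 1\<^sub>m p"
      unfolding Units_def ring_mat_def by auto
    define cA where "cA = fnorm A + 1"
    have cA: "cA > 0" "cA \<ge> fnorm A" unfolding cA_def using fnorm_ge0[of A] by auto
    define K where "K = (fnorm B)\<^sup>2 * cA"
    have key: "1 \<le> K * (rs - Rq y)" if y: "y \<in> carrier_vec p" and ny: "nrm2 y = 1" for y
    proof -
      have Ay: "A *\<^sub>v y \<in> carrier_vec p" using A y by simp
      have "y = B *\<^sub>v (A *\<^sub>v y)"
        using assoc_mult_mat_vec[OF B A y] BA y by simp
      hence "nrm2 y \<le> (fnorm B)\<^sup>2 * nrm2 (A *\<^sub>v y)" using nrm2_mult_bound[OF B Ay] by simp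
      also have "nrm2 (A *\<^sub>v y) \<le> cA * Re ((A *\<^sub>v y) \<bullet>c y)"
        by (rule psd_cs[OF A Aherm Apsd cA(1) order_trans[OF Rq_bound[OF A] mult_right_mono[OF cA(2) nrm2_ge0]] y])
      hence "(fnorm B)\<^sup>2 * nrm2 (A *\<^sub>v y) \<le> (fnorm B)\<^sup>2 * (cA * Re ((A *\<^sub>v y) \<bullet>c y))"
        by (intro mult_left_mono) auto
      finally show ?thesis unfolding AyRe[OF y] ny K_def by (simp add: mult.assoc)
    qed
    have K: "K > 0"
    proof -
      have "1 \<le> K * (rs - Rq (unit_vec p 0))" by (rule key[OF unit_vec_carrier nrm2_unit[OF p]])
      moreover have "K \<ge> 0" unfolding K_def using cA by simp
      ultimately show ?thesis by (cases "K = 0") auto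
    qed
    have "Sup S \<le> rs - 1 / K"
    proof (rule cSup_least[OF Sne])
      fix s assume "s \<in> S"
      then obtain y where y: "y \<in> carrier_vec p" "nrm2 y = 1" and s: "s = Rq y" unfolding S_def by auto
      have "1 \<le> K * (rs - Rq y)" by (rule key[OF y])
      hence "1 / K \<le> rs - Rq y" using K by (simp add: field_simps)
      thus "s \<le> rs - 1 / K" using s by simp
    qed
    with K show ?thesis unfolding rs_def by simp
  qed
qed


lemma eig_set_props: assumes A: "(A::complex mat) \<in> carrier_mat k k" and k: "k > 0"
  shows "finite {e. eigenvalue A e}" "{e. eigenvalue A e} \<noteq> {}"
  using card_finite_spectrum(1)[OF A] spectrum_non_empty[OF A k] unfolding spectrum_def by auto

lemma mat_vec_zero: "A \<in> carrier_mat nr nc \<Longrightarrow> A *\<^sub>v 0\<^sub>v nc = (0\<^sub>v nr :: 'a::comm_ring_1 vec)"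
  by (intro eq_vecI) (auto simp: scalar_prod_def)

lemma smult_vec_zero_imp: assumes v: "v \<in> carrier_vec n" "v \<noteq> 0\<^sub>v n" and kv: "(k::complex) \<cdot>\<^sub>v v = 0\<^sub>v n"
  shows "k = 0"
proof -
  have "nrm2 (k \<cdot>\<^sub>v v) = 0" using kv by simp
  hence "(cmod k)\<^sup>2 * nrm2 v = 0" using nrm2_smult[OF v(1)] by simp
  moreover have "nrm2 v \<noteq> 0" using nrm2_eq0[OF v(1)] v(2) by simp
  ultimately show ?thesis by simp
qed

lemma eig_le_bound:
  assumes C: "C \<in> carrier_mat p q" and mu: "\<mu> \<ge> 0"
    and bound: "\<And>y. y \<in> carrier_vec p \<Longrightarrow> nrm2 (adj C *\<^sub>v y) \<le> \<mu> * nrm2 y"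
    and ev: "eigenvalue (adj C * C) k"
  shows "Re k \<le> \<mu>"
proof -
  from ev obtain v where v: "v \<in> carrier_vec q" "v \<noteq> 0\<^sub>v q" and Gv: "(adj C * C) *\<^sub>v v = k \<cdot>\<^sub>v v"
    unfolding eigenvalue_def eigenvector_def using C by auto
  define w where "w = C *\<^sub>v v"
  have w: "w \<in> carrier_vec p" using C v unfolding w_def by simp
  have aw: "adj C *\<^sub>v w = k \<cdot>\<^sub>v v" using Gv assoc_mult_mat_vec[OF adj_carrier[OF C] C v(1)] unfolding w_def by simp
  show ?thesis
  proof (cases "w = 0\<^sub>v p")
    case True
    hence "k \<cdot>\<^sub>v v = 0\<^sub>v q" using aw mat_vec_zero[OF adj_carrier[OF C]] by auto
    hence "k = 0" using smult_vec_zero_imp[OF v] by simp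
    thus ?thesis using mu by simp
  next
    case False
    have "C *\<^sub>v (adj C *\<^sub>v w) = C *\<^sub>v (k \<cdot>\<^sub>v v)" by (simp only: aw)
    also have "\<dots> = k \<cdot>\<^sub>v w" unfolding w_def by (rule mult_mat_vec[OF C v(1)])
    finally have Cw: "C *\<^sub>v (adj C *\<^sub>v w) = k \<cdot>\<^sub>v w" .
    have awc: "adj C *\<^sub>v w \<in> carrier_vec q" using adj_carrier[OF C] w by simp
    have "(C *\<^sub>v (adj C *\<^sub>v w)) \<bullet>c w = (adj C *\<^sub>v w) \<bullet>c (adj C *\<^sub>v w)"
      by (rule ip_adj[OF C awc w])
    hence "k * (w \<bullet>c w) = of_real (nrm2 (adj C *\<^sub>v w))"
      unfolding Cw ip_smult_left[OF w w] ip_self_real[of "adj C *\<^sub>v w"] .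
    hence e: "k * of_real (nrm2 w) = of_real (nrm2 (adj C *\<^sub>v w))" unfolding ip_self_real .
    have pos: "nrm2 w > 0" using nrm2_eq0[OF w] False nrm2_ge0[of w] by simp
    have "Re k * nrm2 w = nrm2 (adj C *\<^sub>v w)" using arg_cong[OF e, of Re] by simp
    also have "\<dots> \<le> \<mu> * nrm2 w" by (rule bound[OF w])
    finally show ?thesis using pos by simp
  qed
qed

lemma sigma_max_le:
  assumes C: "C \<in> carrier_mat p q" and q: "q > 0" and mu: "\<mu> \<ge> 0"
    and bound: "\<And>y. y \<in> carrier_vec p \<Longrightarrow> nrm2 (adj C *\<^sub>v y) \<le> \<mu> * nrm2 y"
  shows "sigma_max C \<le> sqrt \<mu>"
proof -
  have G: "adj C * C \<in> carrier_mat q q" using mult_carrier_mat[OF adj_carrier[OF C] C] .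
  let ?T = "{Re k |k. eigenvalue (adj C * C) k}"
  have T: "?T = Re ` {k. eigenvalue (adj C * C) k}" by auto
  have fin: "finite ?T" "?T \<noteq> {}" unfolding T using eig_set_props[OF G q] by auto
  have "Max ?T \<le> \<mu>" using fin eig_le_bound[OF C mu bound] by (subst Max_le_iff) auto
  thus ?thesis unfolding sigma_max_def mat_adjoint_adj by simp
qed

lemma sigma_max_eq:
  assumes C: "C \<in> carrier_mat p q" and q: "q > 0" and mu: "\<mu> \<ge> 0"
    and bound: "\<And>y. y \<in> carrier_vec p \<Longrightarrow> nrm2 (adj C *\<^sub>v y) \<le> \<mu> * nrm2 y"
    and y0: "y0 \<in> carrier_vec p" "y0 \<noteq> 0\<^sub>v p" and att: "C *\<^sub>v (adj C *\<^sub>v y0) = of_real \<mu> \<cdot>\<^sub>v y0"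
  shows "sigma_max C = sqrt \<mu>"
proof -
  have G: "adj C * C \<in> carrier_mat q q" using mult_carrier_mat[OF adj_carrier[OF C] C] .
  let ?T = "{Re k |k. eigenvalue (adj C * C) k}"
  have T: "?T = Re ` {k. eigenvalue (adj C * C) k}" by auto
  have fin: "finite ?T" "?T \<noteq> {}" unfolding T using eig_set_props[OF G q] by auto
  have "eigenvalue (adj C * C) (of_real \<mu>)"
  proof (cases "\<mu> = 0")
    case True
    have z: "adj C *\<^sub>v y = 0\<^sub>v q" if y: "y \<in> carrier_vec p" for y
    proof -
      have "nrm2 (adj C *\<^sub>v y) = 0" using bound[OF y] True nrm2_ge0[of "adj C *\<^sub>v y"] by simp
      thus ?thesis using nrm2_eq0[of "adj C *\<^sub>v y" q] adj_carrier[OF C] y by simp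
    qed
    have "(adj C * C) *\<^sub>v unit_vec q 0 = 0\<^sub>v q"
      using C z[of "C *\<^sub>v unit_vec q 0"] assoc_mult_mat_vec[OF adj_carrier[OF C] C unit_vec_carrier] by simp
    moreover have "unit_vec q 0 \<noteq> (0\<^sub>v q :: complex vec)"
    proof
      assume a: "unit_vec q 0 = (0\<^sub>v q :: complex vec)"
      have "(1::complex) = unit_vec q 0 $ 0" using q by simp
      also have "\<dots> = 0\<^sub>v q $ 0" by (simp only: a)
      also have "\<dots> = 0" using q by simp
      finally show False by simp
    qed
    ultimately show ?thesis unfolding eigenvalue_def eigenvector_def using True C
      by (intro exI[of _ "unit_vec q 0"]) auto
  next
    case False
    define v where "v = adj C *\<^sub>v y0"
    have v: "v \<in> carrier_vec q" using adj_carrier[OF C] y0 unfolding v_def by simp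
    have "(adj C * C) *\<^sub>v v = adj C *\<^sub>v (C *\<^sub>v v)" by (rule assoc_mult_mat_vec[OF adj_carrier[OF C] C v])
    also have "\<dots> = adj C *\<^sub>v (of_real \<mu> \<cdot>\<^sub>v y0)" unfolding v_def att ..
    also have "\<dots> = of_real \<mu> \<cdot>\<^sub>v v" unfolding v_def by (rule mult_mat_vec[OF adj_carrier[OF C] y0(1)])
    finally have Gv: "(adj C * C) *\<^sub>v v = of_real \<mu> \<cdot>\<^sub>v v" .
    have "v \<bullet>c v = y0 \<bullet>c (C *\<^sub>v v)"
      using ip_adj[OF adj_carrier[OF C] y0(1) v] unfolding v_def by simp
    also have "\<dots> = y0 \<bullet>c (of_real \<mu> \<cdot>\<^sub>v y0)" unfolding v_def att ..
    also have "\<dots> = of_real \<mu> * (y0 \<bullet>c y0)" using ip_smult_right[OF y0(1) y0(1), of "of_real \<mu>"] by simp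
    finally have "nrm2 v = \<mu> * nrm2 y0" unfolding ip_self_real by (metis of_real_eq_iff of_real_mult)
    moreover have "nrm2 y0 > 0" using nrm2_eq0[OF y0(1)] y0(2) nrm2_ge0[of y0] by simp
    ultimately have "nrm2 v \<noteq> 0" using False mu by simp
    hence "v \<noteq> 0\<^sub>v q" by auto
    thus ?thesis unfolding eigenvalue_def eigenvector_def using Gv v C by auto
  qed
  hence mem: "\<mu> \<in> ?T" by force
  have "Max ?T = \<mu>"
    by (rule Max_eqI[OF fin(1)]) (use eig_le_bound[OF C mu bound] mem in auto)
  thus ?thesis unfolding sigma_max_def mat_adjoint_adj by simp
qed


lemma cmat_carrier[simp]: "A \<in> carrier_mat p q \<Longrightarrow> cmat A \<in> carrier_mat p q"
  unfolding cmat_def by simp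

lemma cmat_dims[simp]: "dim_row (cmat A) = dim_row A" "dim_col (cmat A) = dim_col A"
  unfolding cmat_def by simp_all

lemma sym_psd_kappa:
  assumes X: "X \<in> carrier_mat p p" and sym: "X\<^sup>T = X" and p: "p > 0"
    and psd: "\<And>y. y \<in> carrier_vec p \<Longrightarrow> Re ((cmat X *\<^sub>v y) \<bullet>c y) \<ge> 0"
  shows "\<forall>y \<in> carrier_vec p. Re ((cmat X *\<^sub>v y) \<bullet>c y) \<le> sigma_max_real X * nrm2 y"
    "\<exists>v. v \<in> carrier_vec p \<and> v \<noteq> 0\<^sub>v p \<and> cmat X *\<^sub>v v = of_real (sigma_max_real X) \<cdot>\<^sub>v v"
proof -
  define H where "H = cmat X"
  have H: "H \<in> carrier_mat p p" unfolding H_def using X by simp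
  have aH: "adj H = H" unfolding H_def adj_cmat sym ..
  have herm: "(H *\<^sub>v x) \<bullet>c y = x \<bullet>c (H *\<^sub>v y)" if "x \<in> carrier_vec p" "y \<in> carrier_vec p" for x y
    using ip_adj[OF H that] aH by simp
  have psdH: "Re ((H *\<^sub>v y) \<bullet>c y) \<ge> 0" if "y \<in> carrier_vec p" for y using psd[OF that] unfolding H_def .
  obtain lam v where v: "v \<in> carrier_vec p" "v \<noteq> 0\<^sub>v p" and Hv: "H *\<^sub>v v = of_real lam \<cdot>\<^sub>v v"
    and ray: "\<And>y. y \<in> carrier_vec p \<Longrightarrow> Re ((H *\<^sub>v y) \<bullet>c y) \<le> lam * nrm2 y"
    using hermitian_top_eig[OF H herm p] by blast
  have nv: "nrm2 v > 0" using nrm2_eq0[OF v(1)] v(2) nrm2_ge0[of v] by simp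
  have "Re ((H *\<^sub>v v) \<bullet>c v) = lam * nrm2 v"
    unfolding Hv ip_smult_left[OF v(1) v(1)] ip_self_real by simp
  hence lam: "lam \<ge> 0" using psdH[OF v(1)] nv by (simp add: zero_le_mult_iff)
  have bound: "nrm2 (adj H *\<^sub>v y) \<le> lam\<^sup>2 * nrm2 y" if y: "y \<in> carrier_vec p" for y
  proof (cases "lam = 0")
    case True
    define cH where "cH = fnorm H + 1"
    have cH: "cH > 0" "cH \<ge> fnorm H" unfolding cH_def using fnorm_ge0[of H] by auto
    have "nrm2 (H *\<^sub>v y) \<le> cH * Re ((H *\<^sub>v y) \<bullet>c y)"
      by (rule psd_cs[OF H herm psdH cH(1) order_trans[OF Rq_bound[OF H] mult_right_mono[OF cH(2) nrm2_ge0]] y])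
    also have "\<dots> \<le> 0" using ray[OF y] True cH(1) by (simp add: mult_nonneg_nonpos)
    finally show ?thesis using aH True by simp
  next
    case False
    hence lp: "lam > 0" using lam by simp
    have "nrm2 (H *\<^sub>v y) \<le> lam * Re ((H *\<^sub>v y) \<bullet>c y)"
      by (rule psd_cs[OF H herm psdH lp ray y])
    also have "\<dots> \<le> lam * (lam * nrm2 y)" using ray[OF y] lp by (intro mult_left_mono) auto
    finally show ?thesis using aH by (simp add: power2_eq_square mult.assoc)
  qed
  have att: "H *\<^sub>v (adj H *\<^sub>v v) = of_real (lam\<^sup>2) \<cdot>\<^sub>v v"
  proof -
    have "H *\<^sub>v (adj H *\<^sub>v v) = H *\<^sub>v (of_real lam \<cdot>\<^sub>v v)" unfolding aH Hv ..
    also have "\<dots> = of_real lam \<cdot>\<^sub>v (H *\<^sub>v v)" by (rule mult_mat_vec[OF H v(1)])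
    also have "\<dots> = of_real (lam\<^sup>2) \<cdot>\<^sub>v v" unfolding Hv by (simp add: power2_eq_square smult_smult_assoc)
    finally show ?thesis .
  qed
  have "sigma_max H = sqrt (lam\<^sup>2)"
    by (rule sigma_max_eq[OF H p _ bound v att]) simp
  hence sm: "sigma_max_real X = lam" unfolding sigma_max_real_def H_def cmat_def using lam by simp
  show "\<forall>y \<in> carrier_vec p. Re ((cmat X *\<^sub>v y) \<bullet>c y) \<le> sigma_max_real X * nrm2 y"
    using ray unfolding sm H_def by blast
  show "\<exists>v. v \<in> carrier_vec p \<and> v \<noteq> 0\<^sub>v p \<and> cmat X *\<^sub>v v = of_real (sigma_max_real X) \<cdot>\<^sub>v v"
    using v Hv unfolding sm H_def by blast
qed


lemma cmat_mult: assumes "A \<in> carrier_mat p q" "B \<in> carrier_mat q r"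
  shows "cmat (A * B) = cmat A * cmat B"
  unfolding cmat_def using of_real_hom.mat_hom_mult[OF assms] .

lemma cmat_smult: "cmat (c \<cdot>\<^sub>m A) = of_real c \<cdot>\<^sub>m cmat A"
  unfolding cmat_def by (rule eq_matI) auto

lemma cmat_add: assumes "A \<in> carrier_mat p q" "B \<in> carrier_mat p q"
  shows "cmat (A + B) = cmat A + cmat B"
  unfolding cmat_def using assms by (intro eq_matI) auto

lemma cmat_one: "cmat (1\<^sub>m k) = 1\<^sub>m k"
  unfolding cmat_def by (rule eq_matI) auto

lemma cmv_mult: assumes "A \<in> carrier_mat p q" "B \<in> carrier_mat q r" "x \<in> carrier_vec r"
  shows "cmat (A * B) *\<^sub>v x = cmat A *\<^sub>v (cmat B *\<^sub>v x)"
  unfolding cmat_mult[OF assms(1,2)] using assms by (intro assoc_mult_mat_vec) auto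

lemma trans_ip: assumes A: "A \<in> carrier_mat p q" and x: "x \<in> carrier_vec q" and y: "y \<in> carrier_vec p"
  shows "(cmat A *\<^sub>v x) \<bullet>c y = x \<bullet>c (cmat (A\<^sup>T) *\<^sub>v y)"
  using ip_adj[OF cmat_carrier[OF A] x y] unfolding adj_cmat .

lemma sym_ip: assumes A: "A \<in> carrier_mat p p" and s: "A\<^sup>T = A" and x: "x \<in> carrier_vec p" and y: "y \<in> carrier_vec p"
  shows "(cmat A *\<^sub>v x) \<bullet>c y = x \<bullet>c (cmat A *\<^sub>v y)"
  using trans_ip[OF A x y] unfolding s .

lemma minv_eq: assumes A: "(A::'a::field mat) \<in> carrier_mat k k" and B: "B \<in> carrier_mat k k" and AB: "A * B = 1\<^sub>m k"
  shows "minv A = B"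
proof -
  have BA: "B * A = 1\<^sub>m k" by (rule mat_mult_left_right_inverse[OF A B AB])
  have ex: "\<exists>B. B \<in> carrier_mat (dim_row A) (dim_row A) \<and> A * B = 1\<^sub>m (dim_row A) \<and> B * A = 1\<^sub>m (dim_row A)"
    using A B AB BA by auto
  define B' where "B' = minv A"
  have B': "B' \<in> carrier_mat k k" "A * B' = 1\<^sub>m k" "B' * A = 1\<^sub>m k"
    using someI_ex[OF ex] A unfolding B'_def minv_def by auto
  have "B' * (A * B) = B'" unfolding AB using B'(1) by simp
  hence "B' = B' * (A * B)" by simp
  also have "\<dots> = (B' * A) * B" by (rule assoc_mult_mat[symmetric, OF B'(1) A B])
  also have "\<dots> = B" using B'(3) B by simp
  finally show ?thesis unfolding B'_def .
qed

lemma minv_det: assumes A: "(A::'a::field mat) \<in> carrier_mat k k" and d: "det A \<noteq> 0"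
  shows "minv A \<in> carrier_mat k k" "A * minv A = 1\<^sub>m k" "minv A * A = 1\<^sub>m k"
proof -
  from det_non_zero_imp_unit[OF A d, of undefined]
  obtain B where B: "B \<in> carrier_mat k k" and BA: "B * A = 1\<^sub>m k"
    unfolding Units_def ring_mat_def by auto
  have AB: "A * B = 1\<^sub>m k" by (rule mat_mult_left_right_inverse[OF B A BA])
  have "minv A = B" by (rule minv_eq[OF A B AB])
  thus "minv A \<in> carrier_mat k k" "A * minv A = 1\<^sub>m k" "minv A * A = 1\<^sub>m k" using B AB BA by auto
qed

lemma inv_sym: assumes M: "(M::real mat) \<in> carrier_mat k k" and Mi: "Mi \<in> carrier_mat k k"
  and s: "M\<^sup>T = M" and MMi: "M * Mi = 1\<^sub>m k" and MiM: "Mi * M = 1\<^sub>m k"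
  shows "Mi\<^sup>T = Mi"
proof -
  have "Mi\<^sup>T * M = 1\<^sub>m k"
    using arg_cong[OF MMi, of transpose_mat] transpose_mult[OF M Mi] s by simp
  have MiT: "Mi\<^sup>T \<in> carrier_mat k k" using Mi by simp
  have "Mi\<^sup>T = Mi\<^sup>T * (M * Mi)" unfolding MMi using MiT by simp
  also have "\<dots> = (Mi\<^sup>T * M) * Mi" using MiT M Mi by (simp add: assoc_mult_mat)
  also have "\<dots> = Mi" unfolding \<open>Mi\<^sup>T * M = 1\<^sub>m k\<close> using Mi by simp
  finally show ?thesis .
qed


lemma re_ip_sym: assumes "x \<in> carrier_vec n" "y \<in> carrier_vec n" shows "Re (y \<bullet>c x) = Re (x \<bullet>c (y::complex vec))"
  using ip_sym[OF assms] by simp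

lemma smult_mat_vec: fixes A :: "complex mat"
  shows "A \<in> carrier_mat p r \<Longrightarrow> v \<in> carrier_vec r \<Longrightarrow> (c \<cdot>\<^sub>m A) *\<^sub>v v = c \<cdot>\<^sub>v (A *\<^sub>v v)"
  by (intro eq_vecI) (auto simp: scalar_prod_def sum_distrib_left mult.assoc)

lemma transpose_smult': "(c \<cdot>\<^sub>m A)\<^sup>T = c \<cdot>\<^sub>m A\<^sup>T"
  by (intro eq_matI) auto

lemma ip_lin4: fixes x :: "complex vec"
  assumes x: "x \<in> carrier_vec n" and y: "y \<in> carrier_vec n" and z: "z \<in> carrier_vec n" and w: "w \<in> carrier_vec n"
  shows "(a \<cdot>\<^sub>v x + b \<cdot>\<^sub>v y) \<bullet>c (c \<cdot>\<^sub>v z + d \<cdot>\<^sub>v w) =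
    a * cnj c * (x \<bullet>c z) + a * cnj d * (x \<bullet>c w) + b * cnj c * (y \<bullet>c z) + b * cnj d * (y \<bullet>c w)"
proof -
  have ax: "a \<cdot>\<^sub>v x \<in> carrier_vec n" and by': "b \<cdot>\<^sub>v y \<in> carrier_vec n"
    and cz: "c \<cdot>\<^sub>v z \<in> carrier_vec n" and dw: "d \<cdot>\<^sub>v w \<in> carrier_vec n" using x y z w by auto
  have "(a \<cdot>\<^sub>v x + b \<cdot>\<^sub>v y) \<bullet>c (c \<cdot>\<^sub>v z + d \<cdot>\<^sub>v w) =
     (a \<cdot>\<^sub>v x) \<bullet>c (c \<cdot>\<^sub>v z + d \<cdot>\<^sub>v w) + (b \<cdot>\<^sub>v y) \<bullet>c (c \<cdot>\<^sub>v z + d \<cdot>\<^sub>v w)"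
    by (rule ip_add_left[OF ax by']) (use cz dw in auto)
  also have "(a \<cdot>\<^sub>v x) \<bullet>c (c \<cdot>\<^sub>v z + d \<cdot>\<^sub>v w) = (a \<cdot>\<^sub>v x) \<bullet>c (c \<cdot>\<^sub>v z) + (a \<cdot>\<^sub>v x) \<bullet>c (d \<cdot>\<^sub>v w)"
    by (rule ip_add_right[OF ax cz dw])
  also have "(b \<cdot>\<^sub>v y) \<bullet>c (c \<cdot>\<^sub>v z + d \<cdot>\<^sub>v w) = (b \<cdot>\<^sub>v y) \<bullet>c (c \<cdot>\<^sub>v z) + (b \<cdot>\<^sub>v y) \<bullet>c (d \<cdot>\<^sub>v w)"
    by (rule ip_add_right[OF by' cz dw])
  also have "(a \<cdot>\<^sub>v x) \<bullet>c (c \<cdot>\<^sub>v z) = a * (cnj c * (x \<bullet>c z))"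
    unfolding ip_smult_left[OF x cz] ip_smult_right[OF x z] ..
  also have "(a \<cdot>\<^sub>v x) \<bullet>c (d \<cdot>\<^sub>v w) = a * (cnj d * (x \<bullet>c w))"
    unfolding ip_smult_left[OF x dw] ip_smult_right[OF x w] ..
  also have "(b \<cdot>\<^sub>v y) \<bullet>c (c \<cdot>\<^sub>v z) = b * (cnj c * (y \<bullet>c z))"
    unfolding ip_smult_left[OF y cz] ip_smult_right[OF y z] ..
  also have "(b \<cdot>\<^sub>v y) \<bullet>c (d \<cdot>\<^sub>v w) = b * (cnj d * (y \<bullet>c w))"
    unfolding ip_smult_left[OF y dw] ip_smult_right[OF y w] ..
  finally show ?thesis by (simp add: mult.assoc)
qed

lemma unit_ne0: "k > 0 \<Longrightarrow> unit_vec k 0 \<noteq> (0\<^sub>v k :: complex vec)"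
proof
  assume k: "k > 0" and a: "unit_vec k 0 = (0\<^sub>v k :: complex vec)"
  have "(1::complex) = unit_vec k 0 $ 0" using k by simp
  also have "\<dots> = 0\<^sub>v k $ 0" by (simp only: a)
  also have "\<dots> = 0" using k by simp
  finally show False by simp
qed

context
  fixes k m q :: nat and R L B Minv Ninv :: "real mat" and \<rho> \<sigma>w \<sigma>v :: real
  assumes R: "R \<in> carrier_mat k m" and L: "L \<in> carrier_mat k k" and B: "B \<in> carrier_mat k q"
    and Mi: "Minv \<in> carrier_mat k k" and Ni: "Ninv \<in> carrier_mat k k"
    and Lsym: "L\<^sup>T = L"
    and MMi: "R * R\<^sup>T * Minv = 1\<^sub>m k" and MiM: "Minv * (R * R\<^sup>T) = 1\<^sub>m k"
    and NNi: "R * R\<^sup>T * L * R * R\<^sup>T * Ninv = 1\<^sub>m k" and NiN: "Ninv * (R * R\<^sup>T * L * R * R\<^sup>T) = 1\<^sub>m k"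
    and Lpd: "\<And>x. x \<in> carrier_vec k \<Longrightarrow> x \<noteq> 0\<^sub>v k \<Longrightarrow> Re (x \<bullet>c (cmat L *\<^sub>v x)) > 0"
    and BBt: "B * B\<^sup>T = \<sigma>w\<^sup>2 \<cdot>\<^sub>m L + (\<sigma>v\<^sup>2 * \<rho>) \<cdot>\<^sub>m (L * (R * R\<^sup>T) * L)"
    and rho: "\<rho> > 0" and k: "k > 0" and q: "q > 0" and km: "k \<le> m"
begin

abbreviation "M \<equiv> R * R\<^sup>T"
abbreviation "X \<equiv> R\<^sup>T * Ninv * R"

lemma Rt: "R\<^sup>T \<in> carrier_mat m k" using R by simp
lemma M: "M \<in> carrier_mat k k" using R by simp
lemma Msym: "M\<^sup>T = M" using transpose_mult[OF R Rt] by simp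
lemma Neq: "R * R\<^sup>T * L * R * R\<^sup>T = M * L * M"
  by (rule assoc_mult_mat[OF mult_carrier_mat[OF M L] R Rt])
lemma N: "M * L * M \<in> carrier_mat k k" using M L by simp
lemma Nsym: "(M * L * M)\<^sup>T = M * L * M"
  using transpose_mult[OF mult_carrier_mat[OF M L] M] transpose_mult[OF M L] Msym Lsym M L
  by (simp add: assoc_mult_mat[of _ k k _ k _ k])
lemma NNi': "M * L * M * Ninv = 1\<^sub>m k" using NNi unfolding Neq .
lemma NiN': "Ninv * (M * L * M) = 1\<^sub>m k" using NiN unfolding Neq .
lemma Misym: "Minv\<^sup>T = Minv" by (rule inv_sym[OF M Mi Msym MMi MiM])
lemma Nisym: "Ninv\<^sup>T = Ninv" by (rule inv_sym[OF N Ni Nsym NNi' NiN'])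

lemma I1: "Ninv * M * L = Minv"
proof -
  have "Ninv * M * L = Ninv * M * L * (M * Minv)" using MMi Ni M L by simp
  also have "\<dots> = (Ninv * (M * L * M)) * Minv" using Ni M L Mi
    by (simp add: assoc_mult_mat[of _ k k _ k _ k])
  also have "\<dots> = Minv" unfolding NiN' using Mi by simp
  finally show ?thesis .
qed

lemma I2: "L * M * Ninv = Minv"
proof -
  have "L * M * Ninv = (Minv * M) * (L * M * Ninv)" using MiM Ni M L by simp
  also have "\<dots> = Minv * (M * L * M * Ninv)" using Ni M L Mi
    by (simp add: assoc_mult_mat[of _ k k _ k _ k])
  also have "\<dots> = Minv" unfolding NNi' using Mi by simp
  finally show ?thesis .
qed

lemma Xc: "X \<in> carrier_mat m m" using R Ni by simp
lemma Xsym: "X\<^sup>T = X"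
  using transpose_mult[OF mult_carrier_mat[OF Rt Ni] R] transpose_mult[OF Rt Ni] Nisym R Ni
  by (simp add: assoc_mult_mat[of _ m k _ k _ m])


lemma m_pos: "m > 0" using k km by simp

lemma cv: "A \<in> carrier_mat p r \<Longrightarrow> x \<in> carrier_vec r \<Longrightarrow> cmat A *\<^sub>v x \<in> carrier_vec p"
  by (rule mult_mat_vec_carrier[OF cmat_carrier])

lemma cmv_one: assumes "P \<in> carrier_mat k k" "Q \<in> carrier_mat k k" "P * Q = 1\<^sub>m k" "x \<in> carrier_vec k"
  shows "cmat P *\<^sub>v (cmat Q *\<^sub>v x) = x"
  using cmv_mult[OF assms(1,2,4)] assms(3,4) by (simp add: cmat_one)

lemma cM_form: assumes x: "x \<in> carrier_vec k"
  shows "x \<bullet>c (cmat M *\<^sub>v x) = of_real (nrm2 (cmat (R\<^sup>T) *\<^sub>v x))"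
proof -
  have w: "cmat (R\<^sup>T) *\<^sub>v x \<in> carrier_vec m" using cv[OF Rt x] .
  have "cmat M *\<^sub>v x = cmat R *\<^sub>v (cmat (R\<^sup>T) *\<^sub>v x)" by (rule cmv_mult[OF R Rt x])
  moreover have "(cmat (R\<^sup>T) *\<^sub>v x) \<bullet>c (cmat (R\<^sup>T) *\<^sub>v x) = x \<bullet>c (cmat R *\<^sub>v (cmat (R\<^sup>T) *\<^sub>v x))"
    using trans_ip[OF Rt x w] by simp
  ultimately show ?thesis using ip_self_real by simp
qed

lemma L_psd: assumes x: "x \<in> carrier_vec k" shows "Re (x \<bullet>c (cmat L *\<^sub>v x)) \<ge> 0"
proof (cases "x = 0\<^sub>v k")
  case True thus ?thesis using mat_vec_zero[OF cmat_carrier[OF L]] by simp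
next
  case False thus ?thesis using Lpd[OF x] by simp
qed

lemma Mi_psd: assumes x: "x \<in> carrier_vec k" shows "Re (x \<bullet>c (cmat Minv *\<^sub>v x)) \<ge> 0"
proof -
  define u where "u = cmat Minv *\<^sub>v x"
  have u: "u \<in> carrier_vec k" unfolding u_def using cv[OF Mi x] .
  have xu: "x = cmat M *\<^sub>v u" unfolding u_def using cmv_one[OF M Mi MMi x] by simp
  have "x \<bullet>c u = u \<bullet>c (cmat M *\<^sub>v u)" unfolding xu by (rule sym_ip[OF M Msym u u])
  thus ?thesis unfolding u_def[symmetric] cM_form[OF u] by (simp add: nrm2_ge0)
qed

lemma X_psd: assumes y: "y \<in> carrier_vec m" shows "Re ((cmat X *\<^sub>v y) \<bullet>c y) \<ge> 0"
proof -
  define r where "r = cmat R *\<^sub>v y"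
  have r: "r \<in> carrier_vec k" unfolding r_def using cv[OF R y] .
  define u where "u = cmat Ninv *\<^sub>v r"
  have u: "u \<in> carrier_vec k" unfolding u_def using cv[OF Ni r] .
  have "cmat X *\<^sub>v y = cmat (R\<^sup>T * Ninv) *\<^sub>v r" unfolding r_def by (rule cmv_mult[OF mult_carrier_mat[OF Rt Ni] R y])
  also have "\<dots> = cmat (R\<^sup>T) *\<^sub>v u" unfolding u_def by (rule cmv_mult[OF Rt Ni r])
  finally have Xy: "cmat X *\<^sub>v y = cmat (R\<^sup>T) *\<^sub>v u" .
  have "(cmat (R\<^sup>T) *\<^sub>v u) \<bullet>c y = u \<bullet>c r" using trans_ip[OF Rt u y] unfolding r_def by simp
  also have "r = cmat (M * L * M) *\<^sub>v u" unfolding u_def using cmv_one[OF N Ni NNi' r] by simp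
  also have "\<dots> = cmat M *\<^sub>v (cmat L *\<^sub>v (cmat M *\<^sub>v u))"
    using cmv_mult[OF mult_carrier_mat[OF M L] M u] cmv_mult[OF M L cv[OF M u]] by simp
  also have "u \<bullet>c \<dots> = (cmat M *\<^sub>v u) \<bullet>c (cmat L *\<^sub>v (cmat M *\<^sub>v u))"
    by (rule sym_ip[symmetric, OF M Msym u cv[OF L cv[OF M u]]])
  finally have "(cmat X *\<^sub>v y) \<bullet>c y = (cmat M *\<^sub>v u) \<bullet>c (cmat L *\<^sub>v (cmat M *\<^sub>v u))" unfolding Xy .
  thus ?thesis using L_psd[OF cv[OF M u]] by simp
qed

definition kap where "kap = sigma_max_real X"

lemma kappa: "\<forall>y \<in> carrier_vec m. Re ((cmat X *\<^sub>v y) \<bullet>c y) \<le> kap * nrm2 y"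
    "\<exists>v. v \<in> carrier_vec m \<and> v \<noteq> 0\<^sub>v m \<and> cmat X *\<^sub>v v = of_real kap \<cdot>\<^sub>v v"
  unfolding kap_def using sym_psd_kappa[OF Xc Xsym m_pos X_psd] by auto

lemma F1: assumes t: "t \<in> carrier_vec k"
  shows "Re (t \<bullet>c (cmat L *\<^sub>v t)) \<le> kap * Re ((cmat L *\<^sub>v t) \<bullet>c (cmat M *\<^sub>v (cmat L *\<^sub>v t)))"
proof -
  define s where "s = cmat L *\<^sub>v t"
  have s: "s \<in> carrier_vec k" unfolding s_def using cv[OF L t] .
  define y where "y = cmat (R\<^sup>T) *\<^sub>v s"
  have y: "y \<in> carrier_vec m" unfolding y_def using cv[OF Rt s] .
  have Mis: "cmat Minv *\<^sub>v t \<in> carrier_vec k" using cv[OF Mi t] .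
  have "cmat X *\<^sub>v y = cmat (R\<^sup>T * Ninv) *\<^sub>v (cmat R *\<^sub>v y)" by (rule cmv_mult[OF mult_carrier_mat[OF Rt Ni] R y])
  also have "\<dots> = cmat (R\<^sup>T) *\<^sub>v (cmat Ninv *\<^sub>v (cmat R *\<^sub>v y))" by (rule cmv_mult[OF Rt Ni cv[OF R y]])
  also have "cmat R *\<^sub>v y = cmat M *\<^sub>v s" unfolding y_def by (rule cmv_mult[symmetric, OF R Rt s])
  also have "cmat Ninv *\<^sub>v (cmat M *\<^sub>v s) = cmat (Ninv * M) *\<^sub>v s" by (rule cmv_mult[symmetric, OF Ni M s])
  also have "\<dots> = cmat (Ninv * M * L) *\<^sub>v t" unfolding s_def by (rule cmv_mult[symmetric, OF mult_carrier_mat[OF Ni M] L t])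
  also have "Ninv * M * L = Minv" by (rule I1)
  finally have Xy: "cmat X *\<^sub>v y = cmat (R\<^sup>T) *\<^sub>v (cmat Minv *\<^sub>v t)" .
  have "(cmat X *\<^sub>v y) \<bullet>c y = (cmat Minv *\<^sub>v t) \<bullet>c (cmat R *\<^sub>v y)"
    unfolding Xy using trans_ip[OF Rt Mis y] by simp
  also have "cmat R *\<^sub>v y = cmat M *\<^sub>v s" unfolding y_def by (rule cmv_mult[symmetric, OF R Rt s])
  also have "(cmat Minv *\<^sub>v t) \<bullet>c (cmat M *\<^sub>v s) = t \<bullet>c (cmat Minv *\<^sub>v (cmat M *\<^sub>v s))"
    by (rule sym_ip[OF Mi Misym t cv[OF M s]])
  also have "cmat Minv *\<^sub>v (cmat M *\<^sub>v s) = s" by (rule cmv_one[OF Mi M MiM s])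
  finally have e1: "(cmat X *\<^sub>v y) \<bullet>c y = t \<bullet>c s" .
  have e2: "nrm2 y = Re (s \<bullet>c (cmat M *\<^sub>v s))" unfolding cM_form[OF s] y_def by simp
  have "Re ((cmat X *\<^sub>v y) \<bullet>c y) \<le> kap * nrm2 y" using kappa(1) y by blast
  thus ?thesis unfolding e1 e2 s_def .
qed


lemma kap_pos: "kap > 0"
proof -
  define t where "t = (unit_vec k 0 :: complex vec)"
  have t: "t \<in> carrier_vec k" "t \<noteq> 0\<^sub>v k" unfolding t_def using unit_ne0[OF k] by auto
  have "0 < Re (t \<bullet>c (cmat L *\<^sub>v t))" by (rule Lpd[OF t])
  also have "\<dots> \<le> kap * Re ((cmat L *\<^sub>v t) \<bullet>c (cmat M *\<^sub>v (cmat L *\<^sub>v t)))" by (rule F1[OF t(1)])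
  finally have "0 < kap * Re ((cmat L *\<^sub>v t) \<bullet>c (cmat M *\<^sub>v (cmat L *\<^sub>v t)))" .
  moreover have "Re ((cmat L *\<^sub>v t) \<bullet>c (cmat M *\<^sub>v (cmat L *\<^sub>v t))) \<ge> 0"
    unfolding cM_form[OF cv[OF L t(1)]] by (simp add: nrm2_ge0)
  ultimately show ?thesis by (simp add: zero_less_mult_iff)
qed

lemma proj_bound: assumes y: "y \<in> carrier_vec m"
  shows "Re ((cmat R *\<^sub>v y) \<bullet>c (cmat Minv *\<^sub>v (cmat R *\<^sub>v y))) \<le> nrm2 y"
proof -
  define r where "r = cmat R *\<^sub>v y"
  have r: "r \<in> carrier_vec k" unfolding r_def using cv[OF R y] .
  define u where "u = cmat Minv *\<^sub>v r"
  have u: "u \<in> carrier_vec k" unfolding u_def using cv[OF Mi r] .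
  define p where "p = cmat (R\<^sup>T) *\<^sub>v u"
  have p: "p \<in> carrier_vec m" unfolding p_def using cv[OF Rt u] .
  have py: "p \<bullet>c y = u \<bullet>c r" unfolding p_def r_def using trans_ip[OF Rt u y] by simp
  have "p \<bullet>c p = u \<bullet>c (cmat R *\<^sub>v p)" unfolding p_def using trans_ip[OF Rt u cv[OF Rt u]] by simp
  also have "cmat R *\<^sub>v p = r" unfolding p_def u_def
    using cmv_mult[OF R Rt cv[OF Mi r]] cmv_one[OF M Mi MMi r] by simp
  finally have pp: "p \<bullet>c p = u \<bullet>c r" .
  have yp: "Re (y \<bullet>c p) = Re (u \<bullet>c r)" using re_ip_sym[OF p y] py by simp
  have "(y - p) \<bullet>c (y - p) = y \<bullet>c (y - p) - p \<bullet>c (y - p)"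
    by (rule ip_minus_left[of _ m]) (use y p in auto)
  also have "\<dots> = (y \<bullet>c y - y \<bullet>c p) - (p \<bullet>c y - p \<bullet>c p)"
    using ip_minus_right[OF y y p] ip_minus_right[OF p y p] by simp
  finally have "nrm2 (y - p) = nrm2 y - Re (u \<bullet>c r)"
    unfolding nrm2_def using yp py pp by simp
  hence "Re (u \<bullet>c r) \<le> nrm2 y" using nrm2_ge0[of "y - p"] by simp
  moreover have "u \<bullet>c r = r \<bullet>c (cmat Minv *\<^sub>v r)" unfolding u_def by (rule sym_ip[OF Mi Misym r r])
  ultimately show ?thesis unfolding r_def by simp
qed


abbreviation "Aw s \<equiv> s \<cdot>\<^sub>m 1\<^sub>m k + cmat (\<rho> \<cdot>\<^sub>m (L * M))"

lemma Aw_c: "Aw s \<in> carrier_mat k k" using L M by simp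

lemma shape_vec: assumes P: "P \<in> carrier_mat k k" and Q: "Q \<in> carrier_mat k k" and z: "z \<in> carrier_vec k"
  shows "(c \<cdot>\<^sub>m 1\<^sub>m k + cmat (\<rho> \<cdot>\<^sub>m (P * Q))) *\<^sub>v z = c \<cdot>\<^sub>v z + of_real \<rho> \<cdot>\<^sub>v (cmat P *\<^sub>v (cmat Q *\<^sub>v z))"
proof -
  have PQ: "cmat (P * Q) \<in> carrier_mat k k" using P Q by simp
  have "(c \<cdot>\<^sub>m 1\<^sub>m k + cmat (\<rho> \<cdot>\<^sub>m (P * Q))) *\<^sub>v z = (c \<cdot>\<^sub>m 1\<^sub>m k) *\<^sub>v z + cmat (\<rho> \<cdot>\<^sub>m (P * Q)) *\<^sub>v z"
    by (rule add_mult_distrib_mat_vec) (use P Q z in auto)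
  also have "(c \<cdot>\<^sub>m 1\<^sub>m k) *\<^sub>v z = c \<cdot>\<^sub>v z" by (rule smult_one_mat_vec[OF z])
  also have "cmat (\<rho> \<cdot>\<^sub>m (P * Q)) *\<^sub>v z = of_real \<rho> \<cdot>\<^sub>v (cmat (P * Q) *\<^sub>v z)"
    unfolding cmat_smult by (rule smult_mat_vec[OF PQ z])
  also have "cmat (P * Q) *\<^sub>v z = cmat P *\<^sub>v (cmat Q *\<^sub>v z)" by (rule cmv_mult[OF P Q z])
  finally show ?thesis .
qed

lemma adjAw: "adj (Aw s) = cnj s \<cdot>\<^sub>m 1\<^sub>m k + cmat (\<rho> \<cdot>\<^sub>m (M * L))"
proof -
  have "adj (Aw s) = adj (s \<cdot>\<^sub>m 1\<^sub>m k) + adj (cmat (\<rho> \<cdot>\<^sub>m (L * M)))"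
    by (rule adj_add) (use L M in auto)
  also have "adj (s \<cdot>\<^sub>m 1\<^sub>m k) = cnj s \<cdot>\<^sub>m 1\<^sub>m k" unfolding adj_smult by simp
  also have "adj (cmat (\<rho> \<cdot>\<^sub>m (L * M))) = cmat (\<rho> \<cdot>\<^sub>m (M * L))"
    unfolding adj_cmat transpose_smult' transpose_mult[OF L M] Lsym Msym ..
  finally show ?thesis .
qed

lemma Aw_vec: "z \<in> carrier_vec k \<Longrightarrow> Aw s *\<^sub>v z = s \<cdot>\<^sub>v z + of_real \<rho> \<cdot>\<^sub>v (cmat L *\<^sub>v (cmat M *\<^sub>v z))"
  by (rule shape_vec[OF L M])

lemma adjAw_vec: "z \<in> carrier_vec k \<Longrightarrow> adj (Aw s) *\<^sub>v z = cnj s \<cdot>\<^sub>v z + of_real \<rho> \<cdot>\<^sub>v (cmat M *\<^sub>v (cmat L *\<^sub>v z))"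
  unfolding adjAw by (rule shape_vec[OF M L])

lemma Aw_inj: assumes s: "Re s = 0" and z: "z \<in> carrier_vec k" and Az: "Aw s *\<^sub>v z = 0\<^sub>v k"
  shows "z = 0\<^sub>v k"
proof -
  define w where "w = cmat M *\<^sub>v z"
  have w: "w \<in> carrier_vec k" unfolding w_def using cv[OF M z] .
  have Lw: "cmat L *\<^sub>v w \<in> carrier_vec k" using cv[OF L w] .
  have "0 = (Aw s *\<^sub>v z) \<bullet>c w" unfolding Az using w by (simp add: scalar_prod_def)
  also have "\<dots> = (s \<cdot>\<^sub>v z) \<bullet>c w + (of_real \<rho> \<cdot>\<^sub>v (cmat L *\<^sub>v w)) \<bullet>c w"
    unfolding Aw_vec[OF z] w_def[symmetric] by (rule ip_add_left[of _ k]) (use z w Lw in auto)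
  also have "\<dots> = s * (z \<bullet>c w) + of_real \<rho> * ((cmat L *\<^sub>v w) \<bullet>c w)"
    unfolding ip_smult_left[OF z w] ip_smult_left[OF Lw w] ..
  finally have e: "0 = s * (z \<bullet>c w) + of_real \<rho> * ((cmat L *\<^sub>v w) \<bullet>c w)" .
  have zw: "z \<bullet>c w = of_real (nrm2 (cmat (R\<^sup>T) *\<^sub>v z))" unfolding w_def by (rule cM_form[OF z])
  have lw: "(cmat L *\<^sub>v w) \<bullet>c w = w \<bullet>c (cmat L *\<^sub>v w)" by (rule sym_ip[OF L Lsym w w])
  have "Re (s * (z \<bullet>c w)) = 0" unfolding zw using s by simp
  hence "0 = \<rho> * Re (w \<bullet>c (cmat L *\<^sub>v w))" using arg_cong[OF e, of Re] lw by simp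
  hence "Re (w \<bullet>c (cmat L *\<^sub>v w)) = 0" using rho by simp
  hence "w = 0\<^sub>v k" using Lpd[OF w] by force
  hence "cmat Minv *\<^sub>v w = 0\<^sub>v k" using mat_vec_zero[OF cmat_carrier[OF Mi]] by simp
  moreover have "cmat Minv *\<^sub>v w = z" unfolding w_def by (rule cmv_one[OF Mi M MiM z])
  ultimately show ?thesis by simp
qed

lemma Aw_det: assumes s: "Re s = 0" shows "det (Aw s) \<noteq> 0"
  using det_0_iff_vec_prod_zero[OF Aw_c] Aw_inj[OF s] by blast

lemma G_props: assumes s: "Re s = 0"
  shows "minv (Aw s) \<in> carrier_mat k k" "Aw s * minv (Aw s) = 1\<^sub>m k" "minv (Aw s) * Aw s = 1\<^sub>m k"
  using minv_det[OF Aw_c Aw_det[OF s]] by auto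


lemma Bt: "B\<^sup>T \<in> carrier_mat q k" using B by simp

lemma adjC: assumes G: "G \<in> carrier_mat k k"
  shows "adj (cmat (R\<^sup>T) * G * cmat B) = cmat (B\<^sup>T) * (adj G * cmat R)"
proof -
  have "adj (cmat (R\<^sup>T) * G * cmat B) = adj (cmat B) * adj (cmat (R\<^sup>T) * G)"
    by (rule adj_mult[OF mult_carrier_mat[OF cmat_carrier[OF Rt] G] cmat_carrier[OF B]])
  also have "adj (cmat (R\<^sup>T) * G) = adj G * adj (cmat (R\<^sup>T))"
    by (rule adj_mult[OF cmat_carrier[OF Rt] G])
  finally show ?thesis unfolding adj_cmat by simp
qed

lemma BBt_vec: assumes t: "t \<in> carrier_vec k"
  shows "cmat (B * B\<^sup>T) *\<^sub>v t = of_real (\<sigma>w\<^sup>2) \<cdot>\<^sub>v (cmat L *\<^sub>v t)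
     + of_real (\<sigma>v\<^sup>2 * \<rho>) \<cdot>\<^sub>v (cmat L *\<^sub>v (cmat M *\<^sub>v (cmat L *\<^sub>v t)))"
proof -
  have LML: "L * M * L \<in> carrier_mat k k" using L M by simp
  have "cmat (B * B\<^sup>T) = cmat (\<sigma>w\<^sup>2 \<cdot>\<^sub>m L) + cmat ((\<sigma>v\<^sup>2 * \<rho>) \<cdot>\<^sub>m (L * M * L))"
    unfolding BBt by (rule cmat_add) (use L LML in auto)
  hence "cmat (B * B\<^sup>T) *\<^sub>v t = cmat (\<sigma>w\<^sup>2 \<cdot>\<^sub>m L) *\<^sub>v t + cmat ((\<sigma>v\<^sup>2 * \<rho>) \<cdot>\<^sub>m (L * M * L)) *\<^sub>v t"
    using add_mult_distrib_mat_vec[of "cmat (\<sigma>w\<^sup>2 \<cdot>\<^sub>m L)" k k "cmat ((\<sigma>v\<^sup>2 * \<rho>) \<cdot>\<^sub>m (L * M * L))" t]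
      L LML t by simp
  also have "cmat (\<sigma>w\<^sup>2 \<cdot>\<^sub>m L) *\<^sub>v t = of_real (\<sigma>w\<^sup>2) \<cdot>\<^sub>v (cmat L *\<^sub>v t)"
    unfolding cmat_smult by (rule smult_mat_vec[OF cmat_carrier[OF L] t])
  also have "cmat ((\<sigma>v\<^sup>2 * \<rho>) \<cdot>\<^sub>m (L * M * L)) *\<^sub>v t = of_real (\<sigma>v\<^sup>2 * \<rho>) \<cdot>\<^sub>v (cmat (L * M * L) *\<^sub>v t)"
    unfolding cmat_smult by (rule smult_mat_vec[OF cmat_carrier[OF LML] t])
  also have "cmat (L * M * L) *\<^sub>v t = cmat (L * M) *\<^sub>v (cmat L *\<^sub>v t)"
    by (rule cmv_mult[OF mult_carrier_mat[OF L M] L t])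
  also have "\<dots> = cmat L *\<^sub>v (cmat M *\<^sub>v (cmat L *\<^sub>v t))"
    by (rule cmv_mult[OF L M cv[OF L t]])
  finally show ?thesis .
qed

lemma C_bound: assumes s: "Re s = 0" and y: "y \<in> carrier_vec m"
  shows "nrm2 (adj (cmat (R\<^sup>T) * minv (Aw s) * cmat B) *\<^sub>v y) \<le> (1 / \<rho>\<^sup>2 * \<sigma>w\<^sup>2 * kap + 1 / \<rho> * \<sigma>v\<^sup>2) * nrm2 y"
proof -
  define G where "G = minv (Aw s)"
  have G: "G \<in> carrier_mat k k" "Aw s * G = 1\<^sub>m k" "G * Aw s = 1\<^sub>m k" unfolding G_def using G_props[OF s] by auto
  define \<mu> where "\<mu> = 1 / \<rho>\<^sup>2 * \<sigma>w\<^sup>2 * kap + 1 / \<rho> * \<sigma>v\<^sup>2"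
  have mu: "\<mu> \<ge> 0" unfolding \<mu>_def using kap_pos rho by simp
  have muq: "\<mu> * \<rho>\<^sup>2 = \<sigma>w\<^sup>2 * kap + \<sigma>v\<^sup>2 * \<rho>" unfolding \<mu>_def using rho
    by (simp add: field_simps power2_eq_square)
  define C where "C = cmat (R\<^sup>T) * G * cmat B"
  show ?thesis unfolding G_def[symmetric] C_def[symmetric] \<mu>_def[symmetric]
  proof -
    define r where "r = cmat R *\<^sub>v y"
    have r: "r \<in> carrier_vec k" unfolding r_def using cv[OF R y] .
    define t where "t = adj G *\<^sub>v r"
    have t: "t \<in> carrier_vec k" unfolding t_def using adj_carrier[OF G(1)] r by simp
    define u where "u = cmat L *\<^sub>v t"
    have u: "u \<in> carrier_vec k" unfolding u_def using cv[OF L t] .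
    have Mu: "cmat M *\<^sub>v u \<in> carrier_vec k" using cv[OF M u] .
    have mt: "cmat Minv *\<^sub>v t \<in> carrier_vec k" using cv[OF Mi t] .
    have ay: "adj C *\<^sub>v y = cmat (B\<^sup>T) *\<^sub>v t"
      unfolding C_def adjC[OF G(1)] t_def r_def
      using assoc_mult_mat_vec[OF cmat_carrier[OF Bt] mult_carrier_mat[OF adj_carrier[OF G(1)] cmat_carrier[OF R]] y]
        assoc_mult_mat_vec[OF adj_carrier[OF G(1)] cmat_carrier[OF R] y] by simp
    have "adj (Aw s) *\<^sub>v t = (adj (Aw s) * adj G) *\<^sub>v r"
      unfolding t_def by (rule assoc_mult_mat_vec[symmetric, OF adj_carrier[OF Aw_c] adj_carrier[OF G(1)] r])
    also have "adj (Aw s) * adj G = adj (G * Aw s)" by (rule adj_mult[symmetric, OF G(1) Aw_c])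
    also have "\<dots> = 1\<^sub>m k" unfolding G(3) by simp
    finally have "adj (Aw s) *\<^sub>v t = r" using r by simp
    hence rt: "r = cnj s \<cdot>\<^sub>v t + of_real \<rho> \<cdot>\<^sub>v (cmat M *\<^sub>v u)" unfolding adjAw_vec[OF t] u_def by simp
    have "nrm2 (adj C *\<^sub>v y) = Re ((cmat (B\<^sup>T) *\<^sub>v t) \<bullet>c (cmat (B\<^sup>T) *\<^sub>v t))" unfolding ay nrm2_def ..
    also have "(cmat (B\<^sup>T) *\<^sub>v t) \<bullet>c (cmat (B\<^sup>T) *\<^sub>v t) = t \<bullet>c (cmat B *\<^sub>v (cmat (B\<^sup>T) *\<^sub>v t))"
      using trans_ip[OF Bt t cv[OF Bt t]] by simp
    also have "cmat B *\<^sub>v (cmat (B\<^sup>T) *\<^sub>v t) = cmat (B * B\<^sup>T) *\<^sub>v t" by (rule cmv_mult[symmetric, OF B Bt t])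
    also have "\<dots> = of_real (\<sigma>w\<^sup>2) \<cdot>\<^sub>v u + of_real (\<sigma>v\<^sup>2 * \<rho>) \<cdot>\<^sub>v (cmat L *\<^sub>v (cmat M *\<^sub>v u))"
      unfolding BBt_vec[OF t] u_def ..
    also have "t \<bullet>c \<dots> = t \<bullet>c (of_real (\<sigma>w\<^sup>2) \<cdot>\<^sub>v u) + t \<bullet>c (of_real (\<sigma>v\<^sup>2 * \<rho>) \<cdot>\<^sub>v (cmat L *\<^sub>v (cmat M *\<^sub>v u)))"
      by (rule ip_add_right[of _ k]) (use t u cv[OF L Mu] in auto)
    also have "\<dots> = of_real (\<sigma>w\<^sup>2) * (t \<bullet>c u) + of_real (\<sigma>v\<^sup>2 * \<rho>) * (t \<bullet>c (cmat L *\<^sub>v (cmat M *\<^sub>v u)))"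
      unfolding ip_smult_right[OF t u] ip_smult_right[OF t cv[OF L Mu]] by simp
    also have "t \<bullet>c (cmat L *\<^sub>v (cmat M *\<^sub>v u)) = u \<bullet>c (cmat M *\<^sub>v u)"
      unfolding u_def by (rule sym_ip[symmetric, OF L Lsym t Mu[unfolded u_def]])
    finally have e1: "nrm2 (adj C *\<^sub>v y) = \<sigma>w\<^sup>2 * Re (t \<bullet>c u) + \<sigma>v\<^sup>2 * \<rho> * Re (u \<bullet>c (cmat M *\<^sub>v u))"
      by simp
    have Mir: "cmat Minv *\<^sub>v r = cnj s \<cdot>\<^sub>v (cmat Minv *\<^sub>v t) + of_real \<rho> \<cdot>\<^sub>v u"
    proof -
      have "cmat Minv *\<^sub>v r = cmat Minv *\<^sub>v (cnj s \<cdot>\<^sub>v t) + cmat Minv *\<^sub>v (of_real \<rho> \<cdot>\<^sub>v (cmat M *\<^sub>v u))"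
        unfolding rt by (rule mult_add_distrib_mat_vec[OF cmat_carrier[OF Mi]]) (use t Mu in auto)
      also have "cmat Minv *\<^sub>v (cnj s \<cdot>\<^sub>v t) = cnj s \<cdot>\<^sub>v (cmat Minv *\<^sub>v t)"
        by (rule mult_mat_vec[OF cmat_carrier[OF Mi] t])
      also have "cmat Minv *\<^sub>v (of_real \<rho> \<cdot>\<^sub>v (cmat M *\<^sub>v u)) = of_real \<rho> \<cdot>\<^sub>v (cmat Minv *\<^sub>v (cmat M *\<^sub>v u))"
        by (rule mult_mat_vec[OF cmat_carrier[OF Mi] Mu])
      also have "cmat Minv *\<^sub>v (cmat M *\<^sub>v u) = u" by (rule cmv_one[OF Mi M MiM u])
      finally show ?thesis .
    qed
    define z where "z = t \<bullet>c u"
    have zr: "u \<bullet>c t = z"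
    proof -
      have "t \<bullet>c u = (cmat L *\<^sub>v t) \<bullet>c t" unfolding u_def by (rule sym_ip[symmetric, OF L Lsym t t])
      thus ?thesis unfolding z_def u_def by simp
    qed
    have Mumt: "(cmat M *\<^sub>v u) \<bullet>c (cmat Minv *\<^sub>v t) = u \<bullet>c t"
      using sym_ip[OF M Msym u mt] cmv_one[OF M Mi MMi t] by simp
    have Muu: "(cmat M *\<^sub>v u) \<bullet>c u = u \<bullet>c (cmat M *\<^sub>v u)" by (rule sym_ip[OF M Msym u u])
    have "r \<bullet>c (cmat Minv *\<^sub>v r) = cnj s * cnj (cnj s) * (t \<bullet>c (cmat Minv *\<^sub>v t)) + cnj s * cnj (of_real \<rho>) * (t \<bullet>c u)
       + of_real \<rho> * cnj (cnj s) * ((cmat M *\<^sub>v u) \<bullet>c (cmat Minv *\<^sub>v t)) + of_real \<rho> * cnj (of_real \<rho>) * ((cmat M *\<^sub>v u) \<bullet>c u)"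
      unfolding Mir by (subst rt, rule ip_lin4[OF t Mu mt u])
    also have "\<dots> = (cnj s * s) * (t \<bullet>c (cmat Minv *\<^sub>v t)) + of_real \<rho> * z * (s + cnj s)
       + of_real (\<rho>\<^sup>2) * (u \<bullet>c (cmat M *\<^sub>v u))"
      unfolding Mumt Muu zr z_def[symmetric] by (simp add: algebra_simps power2_eq_square)
    also have "s + cnj s = 0" using s by (simp add: complex_eq_iff)
    also have "cnj s * s = of_real ((cmod s)\<^sup>2)" unfolding complex_norm_square by (rule mult.commute)
    finally have e3: "Re (r \<bullet>c (cmat Minv *\<^sub>v r)) = (cmod s)\<^sup>2 * Re (t \<bullet>c (cmat Minv *\<^sub>v t)) + \<rho>\<^sup>2 * Re (u \<bullet>c (cmat M *\<^sub>v u))"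
      by simp
    have f1: "Re (t \<bullet>c u) \<le> kap * Re (u \<bullet>c (cmat M *\<^sub>v u))" using F1[OF t] unfolding u_def .
    have Q0: "Re (u \<bullet>c (cmat M *\<^sub>v u)) \<ge> 0" unfolding cM_form[OF u] by (simp add: nrm2_ge0)
    have mt0: "Re (t \<bullet>c (cmat Minv *\<^sub>v t)) \<ge> 0" by (rule Mi_psd[OF t])
    have pb: "Re (r \<bullet>c (cmat Minv *\<^sub>v r)) \<le> nrm2 y" unfolding r_def by (rule proj_bound[OF y])
    define Q where "Q = Re (u \<bullet>c (cmat M *\<^sub>v u))"
    have "nrm2 (adj C *\<^sub>v y) \<le> \<sigma>w\<^sup>2 * (kap * Q) + \<sigma>v\<^sup>2 * \<rho> * Q"
      unfolding e1 Q_def using f1 by (simp add: mult_left_mono)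
    also have "\<dots> = \<mu> * (\<rho>\<^sup>2 * Q)" using muq by (simp add: algebra_simps)
    also have "\<dots> \<le> \<mu> * Re (r \<bullet>c (cmat Minv *\<^sub>v r))"
      unfolding e3 Q_def using mu mt0 by (intro mult_left_mono) auto
    also have "\<dots> \<le> \<mu> * nrm2 y" using pb mu by (intro mult_left_mono) auto
    finally show "nrm2 (adj C *\<^sub>v y) \<le> \<mu> * nrm2 y" .
  qed
qed


lemma mu_nonneg: "1 / \<rho>\<^sup>2 * \<sigma>w\<^sup>2 * kap + 1 / \<rho> * \<sigma>v\<^sup>2 \<ge> 0"
  using kap_pos rho by simp

lemma C_carrier: assumes s: "Re s = 0" shows "cmat (R\<^sup>T) * minv (Aw s) * cmat B \<in> carrier_mat m q"
  by (rule mult_carrier_mat[OF mult_carrier_mat[OF cmat_carrier[OF Rt] G_props(1)[OF s]] cmat_carrier[OF B]])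

lemma sig_bound: assumes s: "Re s = 0"
  shows "sigma_max (cmat (R\<^sup>T) * minv (Aw s) * cmat B) \<le> sqrt (1 / \<rho>\<^sup>2 * \<sigma>w\<^sup>2 * kap + 1 / \<rho> * \<sigma>v\<^sup>2)"
  by (rule sigma_max_le[OF C_carrier[OF s] q mu_nonneg C_bound[OF s]])


lemma mv_lin2: assumes A: "A \<in> carrier_mat p r" and x: "x \<in> carrier_vec r" and y: "y \<in> carrier_vec r"
  shows "cmat A *\<^sub>v (a \<cdot>\<^sub>v x + b \<cdot>\<^sub>v y) = a \<cdot>\<^sub>v (cmat A *\<^sub>v x) + b \<cdot>\<^sub>v (cmat A *\<^sub>v y)"
proof -
  have "cmat A *\<^sub>v (a \<cdot>\<^sub>v x + b \<cdot>\<^sub>v y) = cmat A *\<^sub>v (a \<cdot>\<^sub>v x) + cmat A *\<^sub>v (b \<cdot>\<^sub>v y)"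
    by (rule mult_add_distrib_mat_vec[OF cmat_carrier[OF A]]) (use x y in auto)
  also have "cmat A *\<^sub>v (a \<cdot>\<^sub>v x) = a \<cdot>\<^sub>v (cmat A *\<^sub>v x)" by (rule mult_mat_vec[OF cmat_carrier[OF A] x])
  also have "cmat A *\<^sub>v (b \<cdot>\<^sub>v y) = b \<cdot>\<^sub>v (cmat A *\<^sub>v y)" by (rule mult_mat_vec[OF cmat_carrier[OF A] y])
  finally show ?thesis .
qed

lemma zero_smult_add: "t \<in> carrier_vec n \<Longrightarrow> v \<in> carrier_vec n \<Longrightarrow> (0::complex) \<cdot>\<^sub>v t + v = v"
  by (intro eq_vecI) auto

lemma sig_att:
  shows "sigma_max (cmat (R\<^sup>T) * minv (Aw 0) * cmat B) = sqrt (1 / \<rho>\<^sup>2 * \<sigma>w\<^sup>2 * kap + 1 / \<rho> * \<sigma>v\<^sup>2)"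
proof -
  have s: "Re (0::complex) = 0" by simp
  define G where "G = minv (Aw 0)"
  have G: "G \<in> carrier_mat k k" "Aw 0 * G = 1\<^sub>m k" "G * Aw 0 = 1\<^sub>m k" unfolding G_def using G_props[OF s] by auto
  define \<mu> where "\<mu> = 1 / \<rho>\<^sup>2 * \<sigma>w\<^sup>2 * kap + 1 / \<rho> * \<sigma>v\<^sup>2"
  define C where "C = cmat (R\<^sup>T) * G * cmat B"
  obtain y0 where y0: "y0 \<in> carrier_vec m" "y0 \<noteq> 0\<^sub>v m" and Xy0: "cmat X *\<^sub>v y0 = of_real kap \<cdot>\<^sub>v y0"
    using kappa(2) by blast
  define r where "r = cmat R *\<^sub>v y0"
  have r: "r \<in> carrier_vec k" unfolding r_def using cv[OF R y0(1)] .
  define t where "t = adj G *\<^sub>v r"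
  have t: "t \<in> carrier_vec k" unfolding t_def using adj_carrier[OF G(1)] r by simp
  define u where "u = cmat L *\<^sub>v t"
  have u: "u \<in> carrier_vec k" unfolding u_def using cv[OF L t] .
  have Mu: "cmat M *\<^sub>v u \<in> carrier_vec k" using cv[OF M u] .
  define nr where "nr = cmat Ninv *\<^sub>v r"
  have nr: "nr \<in> carrier_vec k" unfolding nr_def using cv[OF Ni r] .
  define mr where "mr = cmat Minv *\<^sub>v r"
  have mr: "mr \<in> carrier_vec k" unfolding mr_def using cv[OF Mi r] .
  have Lr: "cmat L *\<^sub>v r \<in> carrier_vec k" using cv[OF L r] .
  have ay: "adj C *\<^sub>v y0 = cmat (B\<^sup>T) *\<^sub>v t"
    unfolding C_def adjC[OF G(1)] t_def r_def
    using assoc_mult_mat_vec[OF cmat_carrier[OF Bt] mult_carrier_mat[OF adj_carrier[OF G(1)] cmat_carrier[OF R]] y0(1)]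
      assoc_mult_mat_vec[OF adj_carrier[OF G(1)] cmat_carrier[OF R] y0(1)] by simp
  have "adj (Aw 0) *\<^sub>v t = (adj (Aw 0) * adj G) *\<^sub>v r"
    unfolding t_def by (rule assoc_mult_mat_vec[symmetric, OF adj_carrier[OF Aw_c] adj_carrier[OF G(1)] r])
  also have "adj (Aw 0) * adj G = adj (G * Aw 0)" by (rule adj_mult[symmetric, OF G(1) Aw_c])
  also have "\<dots> = 1\<^sub>m k" unfolding G(3) by simp
  finally have "adj (Aw 0) *\<^sub>v t = r" using r by simp
  hence rMu: "r = of_real \<rho> \<cdot>\<^sub>v (cmat M *\<^sub>v u)" unfolding adjAw_vec[OF t] u_def
    using zero_smult_add[OF t, of "of_real \<rho> \<cdot>\<^sub>v (cmat M *\<^sub>v (cmat L *\<^sub>v t))"] Mu[unfolded u_def] by simp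
  have Mu_r: "cmat M *\<^sub>v u = of_real (1/\<rho>) \<cdot>\<^sub>v r" unfolding rMu using rho Mu by (simp add: smult_smult_assoc)
  have u_mr: "u = of_real (1/\<rho>) \<cdot>\<^sub>v mr"
  proof -
    have "u = cmat Minv *\<^sub>v (cmat M *\<^sub>v u)" by (rule cmv_one[OF Mi M MiM u, symmetric])
    also have "\<dots> = of_real (1/\<rho>) \<cdot>\<^sub>v mr" unfolding Mu_r mr_def by (rule mult_mat_vec[OF cmat_carrier[OF Mi] r])
    finally show ?thesis .
  qed
  define w where "w = cmat B *\<^sub>v (cmat (B\<^sup>T) *\<^sub>v t)"
  have "w = cmat (B * B\<^sup>T) *\<^sub>v t" unfolding w_def by (rule cmv_mult[symmetric, OF B Bt t])
  also have "\<dots> = of_real (\<sigma>w\<^sup>2) \<cdot>\<^sub>v u + of_real (\<sigma>v\<^sup>2 * \<rho>) \<cdot>\<^sub>v (cmat L *\<^sub>v (cmat M *\<^sub>v u))"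
    unfolding BBt_vec[OF t] u_def ..
  also have "cmat L *\<^sub>v (cmat M *\<^sub>v u) = of_real (1/\<rho>) \<cdot>\<^sub>v (cmat L *\<^sub>v r)"
    unfolding Mu_r by (rule mult_mat_vec[OF cmat_carrier[OF L] r])
  finally have w: "w = of_real (\<sigma>w\<^sup>2 / \<rho>) \<cdot>\<^sub>v mr + of_real (\<sigma>v\<^sup>2) \<cdot>\<^sub>v (cmat L *\<^sub>v r)"
    unfolding u_mr using rho by (simp add: smult_smult_assoc)
  define z where "z = of_real (\<sigma>w\<^sup>2 / \<rho>\<^sup>2) \<cdot>\<^sub>v nr + of_real (\<sigma>v\<^sup>2 / \<rho>) \<cdot>\<^sub>v mr"
  have z: "z \<in> carrier_vec k" unfolding z_def using nr mr by simp
  have LMnr: "cmat L *\<^sub>v (cmat M *\<^sub>v nr) = mr"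
  proof -
    have "cmat L *\<^sub>v (cmat M *\<^sub>v nr) = cmat (L * M) *\<^sub>v nr" by (rule cmv_mult[symmetric, OF L M nr])
    also have "\<dots> = cmat (L * M * Ninv) *\<^sub>v r" unfolding nr_def by (rule cmv_mult[symmetric, OF mult_carrier_mat[OF L M] Ni r])
    finally show ?thesis unfolding I2 mr_def .
  qed
  have LMmr: "cmat L *\<^sub>v (cmat M *\<^sub>v mr) = cmat L *\<^sub>v r" unfolding mr_def using cmv_one[OF M Mi MMi r] by simp
  have "Aw 0 *\<^sub>v z = of_real \<rho> \<cdot>\<^sub>v (cmat L *\<^sub>v (cmat M *\<^sub>v z))" unfolding Aw_vec[OF z]
    by (rule zero_smult_add[OF z]) (use cv[OF L cv[OF M z]] in simp)
  also have "cmat M *\<^sub>v z = of_real (\<sigma>w\<^sup>2 / \<rho>\<^sup>2) \<cdot>\<^sub>v (cmat M *\<^sub>v nr) + of_real (\<sigma>v\<^sup>2 / \<rho>) \<cdot>\<^sub>v (cmat M *\<^sub>v mr)"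
    unfolding z_def by (rule mv_lin2[OF M nr mr])
  also have "cmat L *\<^sub>v \<dots> = of_real (\<sigma>w\<^sup>2 / \<rho>\<^sup>2) \<cdot>\<^sub>v mr + of_real (\<sigma>v\<^sup>2 / \<rho>) \<cdot>\<^sub>v (cmat L *\<^sub>v r)"
    unfolding mv_lin2[OF L cv[OF M nr] cv[OF M mr]] LMnr LMmr ..
  also have "of_real \<rho> \<cdot>\<^sub>v \<dots> = w" unfolding w using rho mr Lr
    by (simp add: smult_add_distrib_vec smult_smult_assoc power2_eq_square)
  finally have Az: "Aw 0 *\<^sub>v z = w" .
  have "G *\<^sub>v w = G *\<^sub>v (Aw 0 *\<^sub>v z)" unfolding Az ..
  also have "\<dots> = (G * Aw 0) *\<^sub>v z" by (rule assoc_mult_mat_vec[symmetric, OF G(1) Aw_c z])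
  also have "\<dots> = z" unfolding G(3) using z by simp
  finally have Gw: "G *\<^sub>v w = z" .
  have Xy0': "cmat (R\<^sup>T) *\<^sub>v nr = of_real kap \<cdot>\<^sub>v y0"
  proof -
    have "cmat X *\<^sub>v y0 = cmat (R\<^sup>T * Ninv) *\<^sub>v r" unfolding r_def by (rule cmv_mult[OF mult_carrier_mat[OF Rt Ni] R y0(1)])
    also have "\<dots> = cmat (R\<^sup>T) *\<^sub>v nr" unfolding nr_def by (rule cmv_mult[OF Rt Ni r])
    finally show ?thesis using Xy0 by simp
  qed
  have Py0: "cmat (R\<^sup>T) *\<^sub>v mr = y0"
  proof -
    have kp: "kap \<noteq> 0" using kap_pos by simp
    have y0e: "y0 = of_real (1/kap) \<cdot>\<^sub>v (cmat (R\<^sup>T) *\<^sub>v nr)" unfolding Xy0' using kp y0(1) by (simp add: smult_smult_assoc)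
    have "r = of_real (1/kap) \<cdot>\<^sub>v (cmat R *\<^sub>v (cmat (R\<^sup>T) *\<^sub>v nr))"
      unfolding r_def by (subst y0e, rule mult_mat_vec[OF cmat_carrier[OF R] cv[OF Rt nr]])
    also have "cmat R *\<^sub>v (cmat (R\<^sup>T) *\<^sub>v nr) = cmat M *\<^sub>v nr" by (rule cmv_mult[symmetric, OF R Rt nr])
    finally have "mr = cmat Minv *\<^sub>v (of_real (1/kap) \<cdot>\<^sub>v (cmat M *\<^sub>v nr))" unfolding mr_def by simp
    also have "\<dots> = of_real (1/kap) \<cdot>\<^sub>v nr"
      using mult_mat_vec[OF cmat_carrier[OF Mi] cv[OF M nr]] cmv_one[OF Mi M MiM nr] by simp
    finally have "cmat (R\<^sup>T) *\<^sub>v mr = of_real (1/kap) \<cdot>\<^sub>v (cmat (R\<^sup>T) *\<^sub>v nr)"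
      using mult_mat_vec[OF cmat_carrier[OF Rt] nr] by simp
    thus ?thesis using y0e by simp
  qed
  have "C *\<^sub>v (adj C *\<^sub>v y0) = cmat (R\<^sup>T) *\<^sub>v (G *\<^sub>v w)"
    unfolding ay unfolding C_def w_def
    using assoc_mult_mat_vec[OF mult_carrier_mat[OF cmat_carrier[OF Rt] G(1)] cmat_carrier[OF B] cv[OF Bt t]]
      assoc_mult_mat_vec[OF cmat_carrier[OF Rt] G(1) cv[OF B cv[OF Bt t]]] by simp
  also have "\<dots> = cmat (R\<^sup>T) *\<^sub>v z" unfolding Gw ..
  also have "\<dots> = of_real (\<sigma>w\<^sup>2 / \<rho>\<^sup>2) \<cdot>\<^sub>v (of_real kap \<cdot>\<^sub>v y0) + of_real (\<sigma>v\<^sup>2 / \<rho>) \<cdot>\<^sub>v y0"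
    unfolding z_def mv_lin2[OF Rt nr mr] Xy0' Py0 ..
  also have "\<dots> = of_real \<mu> \<cdot>\<^sub>v y0" unfolding \<mu>_def using y0(1)
    by (simp add: smult_smult_assoc add_smult_distrib_vec[symmetric] algebra_simps)
  finally have att: "C *\<^sub>v (adj C *\<^sub>v y0) = of_real \<mu> \<cdot>\<^sub>v y0" .
  have Cc: "C \<in> carrier_mat m q" unfolding C_def G_def using C_carrier[OF s] .
  have bd: "\<And>y. y \<in> carrier_vec m \<Longrightarrow> nrm2 (adj C *\<^sub>v y) \<le> \<mu> * nrm2 y"
    unfolding C_def G_def \<mu>_def by (rule C_bound[OF s])
  show ?thesis unfolding G_def[symmetric] C_def[symmetric] \<mu>_def[symmetric]
    by (rule sigma_max_eq[OF Cc q _ bd y0 att]) (use mu_nonneg in \<open>simp add: \<mu>_def\<close>)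
qed

end


lemma diagm_carrier[simp]: "diagm k d \<in> carrier_mat k k" unfolding diagm_def by simp
lemma diagm_index[simp]: "i < k \<Longrightarrow> j < k \<Longrightarrow> diagm k d $$ (i,j) = (if i = j then d i else 0)"
  unfolding diagm_def by simp
lemma diagm_dims[simp]: "dim_row (diagm k d) = k" "dim_col (diagm k d) = k" unfolding diagm_def by simp_all

lemma diagm_mult: "diagm k d * diagm k e = diagm k (\<lambda>i. d i * e i)"
proof (rule eq_matI)
  fix i j assume i: "i < dim_row (diagm k (\<lambda>i. d i * e i))" and j: "j < dim_col (diagm k (\<lambda>i. d i * e i))"
  hence ij: "i < k" "j < k" by auto
  have "(diagm k d * diagm k e) $$ (i,j) = (\<Sum>l<k. (if i = l then d i else 0) * (if l = j then e l else 0))"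
    using ij by (auto simp: scalar_prod_def lessThan_atLeast0 intro!: sum.cong)
  also have "\<dots> = (\<Sum>l<k. if l = i then (if i = j then d i * e i else 0) else 0)"
    by (rule sum.cong) auto
  also have "\<dots> = diagm k (\<lambda>i. d i * e i) $$ (i,j)" using ij by simp
  finally show "(diagm k d * diagm k e) $$ (i,j) = diagm k (\<lambda>i. d i * e i) $$ (i,j)" .
qed auto

lemma diagm_transpose[simp]: "(diagm k d)\<^sup>T = diagm k d"
  by (rule eq_matI) auto

lemma diagm_one: "diagm k (\<lambda>_. 1) = 1\<^sub>m k" by (rule eq_matI) auto

lemma minv_E: fixes eps :: "nat \<Rightarrow> real" assumes "\<forall>i<n. eps i > 0" shows "minv (diagm n eps) = diagm n (\<lambda>i. 1 / eps i)"
proof (rule minv_eq[OF diagm_carrier diagm_carrier])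
  have "diagm n eps * diagm n (\<lambda>i. 1 / eps i) = diagm n (\<lambda>i. eps i * (1 / eps i))" by (rule diagm_mult)
  also have "\<dots> = diagm n (\<lambda>_. 1)"
  proof (rule eq_matI)
    fix i j assume "i < dim_row (diagm n (\<lambda>_. 1::real))" "j < dim_col (diagm n (\<lambda>_. 1::real))"
    hence ij: "i < n" "j < n" by auto
    moreover have "0 < eps i" using assms ij by blast
    hence "eps i \<noteq> 0" by simp
    ultimately show "diagm n (\<lambda>i. eps i * (1 / eps i)) $$ (i, j) = diagm n (\<lambda>_. 1) $$ (i, j)" using ij by (cases "i = j") auto
  qed auto
  finally show "diagm n eps * diagm n (\<lambda>i. 1 / eps i) = 1\<^sub>m n" unfolding diagm_one .
qed

lemma Eh_eq: "diag_powr (diagm n eps) (-1/2) = diagm n (\<lambda>i. eps i powr (-1/2))"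
  unfolding diag_powr_def by (rule eq_matI) auto

lemma Eh_sq: assumes "\<forall>i<n. eps i > 0"
  shows "diag_powr (diagm n eps) (-1/2) * (diag_powr (diagm n eps) (-1/2))\<^sup>T = minv (diagm n eps)"
proof -
  have "diag_powr (diagm n eps) (-1/2) * (diag_powr (diagm n eps) (-1/2))\<^sup>T
     = diagm n (\<lambda>i. eps i powr (-1/2) * eps i powr (-1/2))" unfolding Eh_eq diagm_transpose diagm_mult ..
  also have "\<dots> = diagm n (\<lambda>i. 1 / eps i)"
  proof (rule eq_matI)
    fix i j assume "i < dim_row (diagm n (\<lambda>i. 1 / eps i))" "j < dim_col (diagm n (\<lambda>i. 1 / eps i))"
    hence ij: "i < n" "j < n" by auto
    have "eps i powr (-1/2) * eps i powr (-1/2) = eps i powr (-1)"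
      using assms ij by (simp add: powr_add[symmetric])
    also have "\<dots> = 1 / eps i" using assms ij by (simp add: powr_minus_divide abs_of_pos)
    finally show "diagm n (\<lambda>i. eps i powr (-1/2) * eps i powr (-1/2)) $$ (i,j) = diagm n (\<lambda>i. 1 / eps i) $$ (i,j)"
      using ij by (cases "i = j") auto
  qed auto
  finally show ?thesis unfolding minv_E[OF assms] .
qed

lemma Wh_eq: assumes "\<rho> > 0" shows "diag_powr (\<rho> \<cdot>\<^sub>m 1\<^sub>m m) (1/2) = sqrt \<rho> \<cdot>\<^sub>m 1\<^sub>m m"
  unfolding diag_powr_def using assms by (intro eq_matI) (auto simp: powr_half_sqrt)

lemma four_block_zero_dims: assumes "P0 \<in> carrier_mat k k" "W0 \<in> carrier_mat 0 0"
  shows "four_block_mat P0 Y Z W0 = P0"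
  using assms by (intro eq_matI) auto


lemma D_carrier: "D_tree n es \<in> carrier_mat n (n - 1)" unfolding D_tree_def by simp

lemma D_index: assumes "i < n" "l < n - 1" "n - 1 \<le> length es"
  shows "D_tree n es $$ (i,l) = (if i = fst (es!l) then 1 else if i = snd (es!l) then -1 else 0)"
  using assms unfolding D_tree_def incidence_def by simp

lemma incid_sum: fixes n :: nat assumes a: "a < n" and b: "b < n" and ab: "a \<noteq> b"
  shows "(\<Sum>j<n. (if j = a then 1 else if j = b then -1 else 0) * (y j :: real)) = y a - y b"
proof -
  have "(\<Sum>j<n. (if j = a then 1 else if j = b then -1 else 0) * y j)
      = (\<Sum>j<n. (if j = a then y j else 0) - (if j = b then y j else 0))"
    by (rule sum.cong) (use ab in auto)
  also have "\<dots> = (\<Sum>j<n. if j = a then y j else 0) - (\<Sum>j<n. if j = b then y j else 0)"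
    by (simp add: sum_subtractf)
  also have "(\<Sum>j<n. if j = a then y j else 0) = y a" using a by (subst sum.delta) auto
  also have "(\<Sum>j<n. if j = b then y j else 0) = y b" using b by (subst sum.delta) auto
  finally show ?thesis .
qed

lemma Dt_kernel: assumes vg: "valid_graph_with_tree n es"
  and ker: "\<And>l. l < n - 1 \<Longrightarrow> (\<Sum>j<n. D_tree n es $$ (j,l) * y j) = (0::real)"
  shows "\<And>i. i < n \<Longrightarrow> y i = y 0"
proof -
  have len: "n - 1 \<le> length es" and ed: "\<And>l. l < length es \<Longrightarrow> fst (es!l) < n \<and> snd (es!l) < n \<and> fst (es!l) \<noteq> snd (es!l)"
    and conn: "\<And>i. i < n \<Longrightarrow> (0, i) \<in> (edge_rel (take (n - 1) es))\<^sup>*"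
    using vg unfolding valid_graph_with_tree_def by auto
  have edge: "y (fst (es!l)) = y (snd (es!l))" if l: "l < n - 1" for l
  proof -
    have ll: "l < length es" using l len by simp
    have "(\<Sum>j<n. D_tree n es $$ (j,l) * y j) = (\<Sum>j<n. (if j = fst (es!l) then 1 else if j = snd (es!l) then -1 else 0) * y j)"
      by (rule sum.cong) (use D_index l len in auto)
    also have "\<dots> = y (fst (es!l)) - y (snd (es!l))" by (rule incid_sum) (use ed[OF ll] in auto)
    finally show ?thesis using ker[OF l] by simp
  qed
  have edge_step: "y u = y v" if uv: "(u, v) \<in> edge_rel (take (n - 1) es)" for u v
  proof -
    from uv have "(u,v) \<in> set (take (n - 1) es) \<or> (v,u) \<in> set (take (n - 1) es)" unfolding edge_rel_def by auto
    then obtain l where l: "l < n - 1" and e: "es!l = (u,v) \<or> es!l = (v,u)"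
      using len by (auto simp: in_set_conv_nth)
    show ?thesis using edge[OF l] e by auto
  qed
  fix i assume i: "i < n"
  have "(0, i) \<in> (edge_rel (take (n - 1) es))\<^sup>*" by (rule conn[OF i])
  thus "y i = y 0"
  proof (induction rule: rtrancl_induct)
    case base thus ?case by simp
  next
    case (step u v) thus ?case using edge_step by simp
  qed
qed

definition Dp :: "nat \<Rightarrow> (nat \<times> nat) list \<Rightarrow> real mat" where
  "Dp n es = mat (n - 1) (n - 1) (\<lambda>(i,l). D_tree n es $$ (i + 1, l))"

lemma Dp_det: assumes vg: "valid_graph_with_tree n es" shows "det (Dp n es) \<noteq> 0"
proof -
  have n2: "n \<ge> 2" using vg unfolding valid_graph_with_tree_def by auto
  have Dpc: "Dp n es \<in> carrier_mat (n - 1) (n - 1)" unfolding Dp_def by simp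
  have DpT: "(Dp n es)\<^sup>T \<in> carrier_mat (n - 1) (n - 1)" using Dpc by simp
  have inj: "z = 0\<^sub>v (n - 1)" if z: "z \<in> carrier_vec (n - 1)" and Dz: "(Dp n es)\<^sup>T *\<^sub>v z = 0\<^sub>v (n - 1)" for z :: "real vec"
  proof -
    define y where "y j = (if j = 0 then 0 else z $ (j - 1))" for j
    have ker: "(\<Sum>j<n. D_tree n es $$ (j,l) * y j) = 0" if l: "l < n - 1" for l
    proof -
      have nn: "n = Suc (n - 1)" using n2 by simp
      have "(\<Sum>j<n. D_tree n es $$ (j,l) * y j) = (\<Sum>j<Suc (n - 1). D_tree n es $$ (j,l) * y j)" using nn by simp
      also have "\<dots> = D_tree n es $$ (0,l) * y 0 + (\<Sum>i<n - 1. D_tree n es $$ (Suc i,l) * y (Suc i))"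
        by (rule sum.lessThan_Suc_shift)
      also have "\<dots> = (\<Sum>i<n - 1. D_tree n es $$ (Suc i,l) * z $ i)" unfolding y_def by simp
      also have "\<dots> = ((Dp n es)\<^sup>T *\<^sub>v z) $ l"
        using l z Dpc by (auto simp: scalar_prod_def lessThan_atLeast0 Dp_def mult.commute intro!: sum.cong)
      also have "\<dots> = 0" using Dz l by simp
      finally show ?thesis .
    qed
    have yc: "y i = y 0" if "i < n" for i by (rule Dt_kernel[OF vg ker that])
    show ?thesis
    proof (rule eq_vecI)
      fix i assume "i < dim_vec (0\<^sub>v (n - 1) :: real vec)"
      hence i: "i < n - 1" by simp
      have "z $ i = y (Suc i)" unfolding y_def by simp
      also have "\<dots> = 0" using yc[of "Suc i"] i unfolding y_def by simp
      finally show "z $ i = 0\<^sub>v (n - 1) $ i" using i by simp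
    qed (use z in simp)
  qed
  have "det ((Dp n es)\<^sup>T) \<noteq> 0" using det_0_iff_vec_prod_zero[OF DpT] inj by blast
  thus ?thesis using det_transpose[OF Dpc] by simp
qed

lemma cD_inj: assumes vg: "valid_graph_with_tree n es" and x: "x \<in> carrier_vec (n - 1)"
  and Dx: "cmat (D_tree n es) *\<^sub>v x = 0\<^sub>v n"
  shows "x = 0\<^sub>v (n - 1)"
proof -
  have Dpc: "cmat (Dp n es) \<in> carrier_mat (n - 1) (n - 1)" unfolding Dp_def cmat_def by simp
  have "det (cmat (Dp n es)) = of_real (det (Dp n es))" unfolding cmat_def by simp
  hence d: "det (cmat (Dp n es)) \<noteq> 0" using Dp_det[OF vg] by simp
  have "cmat (Dp n es) *\<^sub>v x = 0\<^sub>v (n - 1)"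
  proof (rule eq_vecI)
    fix i assume "i < dim_vec (0\<^sub>v (n - 1) :: complex vec)"
    hence i: "i < n - 1" by simp
    have "(cmat (Dp n es) *\<^sub>v x) $ i = (cmat (D_tree n es) *\<^sub>v x) $ (i + 1)"
      using i x by (auto simp: scalar_prod_def Dp_def cmat_def D_tree_def)
    also have "\<dots> = 0" using Dx i by simp
    finally show "(cmat (Dp n es) *\<^sub>v x) $ i = 0\<^sub>v (n - 1) $ i" using i by simp
  qed (use Dpc in \<open>simp add: Dp_def\<close>)
  thus ?thesis using det_0_iff_vec_prod_zero[OF Dpc] d x by blast
qed


lemma cvg: "A \<in> carrier_mat p r \<Longrightarrow> x \<in> carrier_vec r \<Longrightarrow> cmat A *\<^sub>v x \<in> carrier_vec p"
  by (rule mult_mat_vec_carrier[OF cmat_carrier])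

lemma smult_smult_mat: "a \<cdot>\<^sub>m (b \<cdot>\<^sub>m A) = ((a::'a::semigroup_mult) * b) \<cdot>\<^sub>m A"
  by (intro eq_matI) (auto simp: mult.assoc)

lemma smult_mult_smult: assumes "A \<in> carrier_mat a b" "B \<in> carrier_mat b c"
  shows "(x \<cdot>\<^sub>m A) * (y \<cdot>\<^sub>m B) = ((x::real) * y) \<cdot>\<^sub>m (A * B)"
  using assms by (intro eq_matI) (auto simp: scalar_prod_def sum_distrib_left mult_ac)

lemma diag_cmv: assumes v: "v \<in> carrier_vec n"
  shows "cmat (diagm n f) *\<^sub>v v = vec n (\<lambda>i. of_real (f i) * v $ i)"
proof (rule eq_vecI)
  fix i assume "i < dim_vec (vec n (\<lambda>i. of_real (f i) * v $ i))"
  hence i: "i < n" by simp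
  have "(cmat (diagm n f) *\<^sub>v v) $ i = (\<Sum>j<n. of_real (if i = j then f i else 0) * v $ j)"
    using i v by (auto simp: scalar_prod_def cmat_def lessThan_atLeast0 intro!: sum.cong)
  also have "\<dots> = (\<Sum>j<n. if j = i then of_real (f i) * v $ i else 0)" by (rule sum.cong) auto
  also have "\<dots> = of_real (f i) * v $ i" using i by simp
  finally show "(cmat (diagm n f) *\<^sub>v v) $ i = vec n (\<lambda>i. of_real (f i) * v $ i) $ i" using i by simp
qed (use v in simp)

lemma R_carrier: "R_mat n es \<in> carrier_mat (n - 1) (length es)" unfolding R_mat_def by simp

lemma R_index: "i < n - 1 \<Longrightarrow> l < n - 1 \<Longrightarrow> l < length es \<Longrightarrow> R_mat n es $$ (i,l) = (if i = l then 1 else 0)"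
  unfolding R_mat_def by simp

lemma cRt_inj: assumes len: "n - 1 \<le> length es" and x: "x \<in> carrier_vec (n - 1)"
  and Rx: "cmat ((R_mat n es)\<^sup>T) *\<^sub>v x = 0\<^sub>v (length es)"
  shows "x = 0\<^sub>v (n - 1)"
proof (rule eq_vecI)
  fix i assume "i < dim_vec (0\<^sub>v (n - 1) :: complex vec)"
  hence i: "i < n - 1" by simp
  have il: "i < length es" using i len by simp
  have "(cmat ((R_mat n es)\<^sup>T) *\<^sub>v x) $ i = (\<Sum>j<n - 1. of_real (R_mat n es $$ (j,i)) * x $ j)"
    using il x R_carrier[of n es] by (auto simp: scalar_prod_def cmat_def lessThan_atLeast0 intro!: sum.cong)
  also have "\<dots> = (\<Sum>j<n - 1. if j = i then x $ i else 0)"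
    by (rule sum.cong) (use R_index i il in auto)
  also have "\<dots> = x $ i" using i by simp
  finally show "x $ i = 0\<^sub>v (n - 1) $ i" using Rx i il by simp
qed (use x in simp)

lemma det_of_cinj: assumes A: "(A::real mat) \<in> carrier_mat k k"
  and inj: "\<And>x. x \<in> carrier_vec k \<Longrightarrow> cmat A *\<^sub>v x = 0\<^sub>v k \<Longrightarrow> x = 0\<^sub>v k"
  shows "det A \<noteq> 0"
proof -
  have "det (cmat A) \<noteq> 0" using det_0_iff_vec_prod_zero[OF cmat_carrier[OF A]] inj by blast
  moreover have "det (cmat A) = of_real (det A)" unfolding cmat_def by simp
  ultimately show ?thesis by simp
qed


theorem corollary1:
  fixes n :: nat and es :: "(nat \<times> nat) list" and eps :: "nat \<Rightarrow> real"
    and \<rho> \<sigma>w \<sigma>v :: real and W E :: "real mat"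
  assumes "valid_graph_with_tree n es"
    and "\<forall>i < n. eps i > 0"
    and "E = diagm n eps"
    and "\<rho> > 0"
    and "W = \<rho> \<cdot>\<^sub>m 1\<^sub>m (length es)"
  shows "(hinf_norm (Sigma_tilde n es W E \<sigma>w \<sigma>v))\<^sup>2 =
           1 / \<rho>\<^sup>2 * \<sigma>w\<^sup>2 * sigma_max_real ((R_mat n es)\<^sup>T *
              minv (R_mat n es * (R_mat n es)\<^sup>T * L_es n es E * R_mat n es * (R_mat n es)\<^sup>T)
              * R_mat n es)
         + 1 / \<rho> * \<sigma>v\<^sup>2"
proof -
  note vg = assms(1) and epos = assms(2) and Edef = assms(3) and rho = assms(4) and Wdef = assms(5)
  have n2: "n \<ge> 2" and len: "n - 1 \<le> length es" using vg unfolding valid_graph_with_tree_def by auto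
  define k where "k = n - 1"
  define m where "m = length es"
  define q where "q = n + m"
  define R where "R = R_mat n es"
  define D where "D = D_tree n es"
  define L where "L = L_es n es E"
  have kpos: "k > 0" using n2 unfolding k_def by simp
  have km: "k \<le> m" using len unfolding k_def m_def by simp
  have qpos: "q > 0" using n2 unfolding q_def by simp
  have R: "R \<in> carrier_mat k m" unfolding R_def k_def m_def by (rule R_carrier)
  have Rt: "R\<^sup>T \<in> carrier_mat m k" using R by simp
  have D: "D \<in> carrier_mat n k" unfolding D_def k_def by (rule D_carrier)
  have Dt: "D\<^sup>T \<in> carrier_mat k n" using D by simp
  have Einv: "minv E = diagm n (\<lambda>i. 1 / eps i)" unfolding Edef by (rule minv_E[OF epos])
  have Ei: "minv E \<in> carrier_mat n n" unfolding Einv by simp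
  have Leq: "L = D\<^sup>T * minv E * D" unfolding L_def L_es_def D_def ..
  have L: "L \<in> carrier_mat k k" unfolding Leq by (rule mult_carrier_mat[OF mult_carrier_mat[OF Dt Ei] D])
  have Lsym: "L\<^sup>T = L"
  proof -
    have "L\<^sup>T = D\<^sup>T * (D\<^sup>T * minv E)\<^sup>T" unfolding Leq transpose_mult[OF mult_carrier_mat[OF Dt Ei] D] ..
    also have "(D\<^sup>T * minv E)\<^sup>T = (minv E)\<^sup>T * D" using transpose_mult[OF Dt Ei] by simp
    also have "(minv E)\<^sup>T = minv E" unfolding Einv by simp
    also have "D\<^sup>T * (minv E * D) = L" unfolding Leq by (rule assoc_mult_mat[symmetric, OF Dt Ei D])
    finally show ?thesis .
  qed
  have Lpd: "Re (x \<bullet>c (cmat L *\<^sub>v x)) > 0" if x: "x \<in> carrier_vec k" and x0: "x \<noteq> 0\<^sub>v k" for x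
  proof -
    define v where "v = cmat D *\<^sub>v x"
    have v: "v \<in> carrier_vec n" unfolding v_def using cvg[OF D x] .
    have v0: "v \<noteq> 0\<^sub>v n" using cD_inj[OF vg, of x] x x0 unfolding v_def D_def k_def by blast
    define w where "w = cmat (minv E) *\<^sub>v v"
    have w: "w \<in> carrier_vec n" unfolding w_def using cvg[OF Ei v] .
    have "cmat L *\<^sub>v x = cmat (D\<^sup>T * minv E) *\<^sub>v v" unfolding Leq v_def by (rule cmv_mult[OF mult_carrier_mat[OF Dt Ei] D x])
    also have "\<dots> = cmat (D\<^sup>T) *\<^sub>v w" unfolding w_def by (rule cmv_mult[OF Dt Ei v])
    finally have "x \<bullet>c (cmat L *\<^sub>v x) = v \<bullet>c w" using trans_ip[OF D x w] unfolding v_def by simp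
    also have "w = vec n (\<lambda>i. of_real (1 / eps i) * v $ i)" unfolding w_def Einv by (rule diag_cmv[OF v])
    also have "v \<bullet>c vec n (\<lambda>i. of_real (1 / eps i) * v $ i) = (\<Sum>i<n. of_real ((cmod (v $ i))\<^sup>2 / eps i))"
      using v by (auto simp: scalar_prod_def lessThan_atLeast0 complex_norm_square[symmetric] mult_ac intro!: sum.cong)
    finally have e: "Re (x \<bullet>c (cmat L *\<^sub>v x)) = (\<Sum>i<n. (cmod (v $ i))\<^sup>2 / eps i)" by simp
    obtain j where j: "j < n" "v $ j \<noteq> 0"
      using v0 v by (metis eq_vecI carrier_vecD index_zero_vec(1) index_zero_vec(2))
    have "0 < (cmod (v $ j))\<^sup>2 / eps j" using j epos by simp
    also have "\<dots> \<le> (\<Sum>i<n. (cmod (v $ i))\<^sup>2 / eps i)"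
      by (rule member_le_sum) (use j epos in \<open>auto intro: divide_nonneg_pos\<close>)
    finally show ?thesis unfolding e .
  qed
  have Linj: "x = 0\<^sub>v k" if x: "x \<in> carrier_vec k" and Lx: "cmat L *\<^sub>v x = 0\<^sub>v k" for x
  proof (rule ccontr)
    assume "x \<noteq> 0\<^sub>v k"
    from Lpd[OF x this] show False unfolding Lx using x by (simp add: scalar_prod_def)
  qed
  define MM where "MM = R * R\<^sup>T"
  have MMc: "MM \<in> carrier_mat k k" unfolding MM_def using R by simp
  have MMinj: "x = 0\<^sub>v k" if x: "x \<in> carrier_vec k" and Mx: "cmat MM *\<^sub>v x = 0\<^sub>v k" for x
  proof -
    have "cmat MM *\<^sub>v x = cmat R *\<^sub>v (cmat (R\<^sup>T) *\<^sub>v x)" unfolding MM_def by (rule cmv_mult[OF R Rt x])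
    hence "(cmat (R\<^sup>T) *\<^sub>v x) \<bullet>c (cmat (R\<^sup>T) *\<^sub>v x) = x \<bullet>c (cmat MM *\<^sub>v x)"
      using trans_ip[OF Rt x cvg[OF Rt x]] by simp
    also have "\<dots> = 0" unfolding Mx using x by (simp add: scalar_prod_def)
    finally have "cmat (R\<^sup>T) *\<^sub>v x = 0\<^sub>v m" using conjugate_square_eq_0_vec[OF cvg[OF Rt x]] by simp
    thus ?thesis using cRt_inj[OF len, of x] x unfolding R_def k_def m_def by simp
  qed
  have dM: "det MM \<noteq> 0" by (rule det_of_cinj[OF MMc MMinj])
  define Minv where "Minv = minv MM"
  have Mi: "Minv \<in> carrier_mat k k" and MMi: "MM * Minv = 1\<^sub>m k" and MiM: "Minv * MM = 1\<^sub>m k"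
    unfolding Minv_def using minv_det[OF MMc dM] by auto
  define NN where "NN = R * R\<^sup>T * L * R * R\<^sup>T"
  have NNeq: "NN = MM * L * MM" unfolding NN_def MM_def
    by (rule assoc_mult_mat[OF mult_carrier_mat[OF MMc[unfolded MM_def] L] R Rt])
  have NNc: "NN \<in> carrier_mat k k" unfolding NNeq using MMc L by simp
  have NNinj: "x = 0\<^sub>v k" if x: "x \<in> carrier_vec k" and Nx: "cmat NN *\<^sub>v x = 0\<^sub>v k" for x
  proof -
    have "cmat NN *\<^sub>v x = cmat (MM * L) *\<^sub>v (cmat MM *\<^sub>v x)" unfolding NNeq by (rule cmv_mult[OF mult_carrier_mat[OF MMc L] MMc x])
    also have "\<dots> = cmat MM *\<^sub>v (cmat L *\<^sub>v (cmat MM *\<^sub>v x))" by (rule cmv_mult[OF MMc L cvg[OF MMc x]])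
    finally have "cmat MM *\<^sub>v (cmat L *\<^sub>v (cmat MM *\<^sub>v x)) = 0\<^sub>v k" using Nx by simp
    hence "cmat L *\<^sub>v (cmat MM *\<^sub>v x) = 0\<^sub>v k" using MMinj cvg[OF L cvg[OF MMc x]] by blast
    hence "cmat MM *\<^sub>v x = 0\<^sub>v k" using Linj cvg[OF MMc x] by blast
    thus ?thesis using MMinj x by blast
  qed
  have dN: "det NN \<noteq> 0" by (rule det_of_cinj[OF NNc NNinj])
  define Ninv where "Ninv = minv NN"
  have Ni: "Ninv \<in> carrier_mat k k" and NNi: "NN * Ninv = 1\<^sub>m k" and NiN: "Ninv * NN = 1\<^sub>m k"
    unfolding Ninv_def using minv_det[OF NNc dN] by auto
  define Eh where "Eh = diag_powr E (-1/2)"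
  define Wh where "Wh = diag_powr W (1/2)"
  have Eh: "Eh \<in> carrier_mat n n" unfolding Eh_def Edef Eh_eq by simp
  have Whe: "Wh = sqrt \<rho> \<cdot>\<^sub>m 1\<^sub>m m" unfolding Wh_def Wdef m_def by (rule Wh_eq[OF rho])
  have EhEh: "Eh * Eh\<^sup>T = minv E" unfolding Eh_def Edef by (rule Eh_sq[OF epos])
  define A1 where "A1 = \<sigma>w \<cdot>\<^sub>m (D\<^sup>T * Eh)"
  define A2 where "A2 = - \<sigma>v \<cdot>\<^sub>m (L * R * Wh)"
  define B where "B = four_block_mat A1 A2 (0\<^sub>m 0 n) (0\<^sub>m 0 m)"
  have A1: "A1 \<in> carrier_mat k n" unfolding A1_def using Dt Eh by simp
  have LRW0: "L * R * Wh \<in> carrier_mat k m" unfolding Whe by (rule mult_carrier_mat[OF mult_carrier_mat[OF L R]]) simp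
  have A2: "A2 \<in> carrier_mat k m" unfolding A2_def using LRW0 by simp
  have B: "B \<in> carrier_mat k q" unfolding B_def q_def using four_block_carrier_mat[OF A1, of "0\<^sub>m 0 m" 0 m] by simp
  have A1A1: "A1 * A1\<^sup>T = \<sigma>w\<^sup>2 \<cdot>\<^sub>m L"
  proof -
    have P1: "D\<^sup>T * Eh \<in> carrier_mat k n" using Dt Eh by simp
    have EhT: "Eh\<^sup>T \<in> carrier_mat n n" using Eh by simp
    have "A1 * A1\<^sup>T = (\<sigma>w * \<sigma>w) \<cdot>\<^sub>m ((D\<^sup>T * Eh) * (D\<^sup>T * Eh)\<^sup>T)"
      unfolding A1_def transpose_smult' by (rule smult_mult_smult[OF P1]) (use P1 in simp)
    also have "(D\<^sup>T * Eh)\<^sup>T = Eh\<^sup>T * D" unfolding transpose_mult[OF Dt Eh] by simp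
    also have "(D\<^sup>T * Eh) * (Eh\<^sup>T * D) = D\<^sup>T * (Eh * (Eh\<^sup>T * D))"
      by (rule assoc_mult_mat[OF Dt Eh mult_carrier_mat[OF EhT D]])
    also have "Eh * (Eh\<^sup>T * D) = (Eh * Eh\<^sup>T) * D"
      by (rule assoc_mult_mat[symmetric, OF Eh EhT D])
    also have "D\<^sup>T * ((Eh * Eh\<^sup>T) * D) = L" unfolding EhEh Leq by (rule assoc_mult_mat[symmetric, OF Dt Ei D])
    finally show ?thesis by (simp add: power2_eq_square)
  qed
  have A2A2: "A2 * A2\<^sup>T = (\<sigma>v\<^sup>2 * \<rho>) \<cdot>\<^sub>m (L * (R * R\<^sup>T) * L)"
  proof -
    have LR: "L * R \<in> carrier_mat k m" using L R by simp
    have P2: "L * R * Wh = sqrt \<rho> \<cdot>\<^sub>m (L * R)" unfolding Whe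
      using mult_smult_distrib[OF LR one_carrier_mat, of "sqrt \<rho>"] right_mult_one_mat[OF LR] by simp
    have "A2 * A2\<^sup>T = (- \<sigma>v * sqrt \<rho>) \<cdot>\<^sub>m (L * R) * ((- \<sigma>v * sqrt \<rho>) \<cdot>\<^sub>m (L * R)\<^sup>T)"
      unfolding A2_def P2 transpose_smult' by (simp add: smult_smult_mat)
    also have "\<dots> = ((- \<sigma>v * sqrt \<rho>) * (- \<sigma>v * sqrt \<rho>)) \<cdot>\<^sub>m ((L * R) * (L * R)\<^sup>T)"
      by (rule smult_mult_smult[OF LR]) (use LR in simp)
    also have "(L * R)\<^sup>T = R\<^sup>T * L" unfolding transpose_mult[OF L R] Lsym ..
    also have "(L * R) * (R\<^sup>T * L) = ((L * R) * R\<^sup>T) * L" by (rule assoc_mult_mat[symmetric, OF LR Rt L])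
    also have "(L * R) * R\<^sup>T = L * (R * R\<^sup>T)" by (rule assoc_mult_mat[OF L R Rt])
    also have "(- \<sigma>v * sqrt \<rho>) * (- \<sigma>v * sqrt \<rho>) = \<sigma>v\<^sup>2 * \<rho>" using rho by (simp add: power2_eq_square algebra_simps)
    finally show ?thesis .
  qed
  have BBt: "B * B\<^sup>T = \<sigma>w\<^sup>2 \<cdot>\<^sub>m L + (\<sigma>v\<^sup>2 * \<rho>) \<cdot>\<^sub>m (L * (R * R\<^sup>T) * L)"
  proof -
    have z1: "(0\<^sub>m 0 n :: real mat) \<in> carrier_mat 0 n" and z2: "(0\<^sub>m 0 m :: real mat) \<in> carrier_mat 0 m" by auto
    have Bt: "B\<^sup>T = four_block_mat A1\<^sup>T (0\<^sub>m n 0) A2\<^sup>T (0\<^sub>m m 0)"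
      unfolding B_def transpose_four_block_mat[OF A1 A2 z1 z2] by simp
    have "B * B\<^sup>T = four_block_mat (A1 * A1\<^sup>T + A2 * A2\<^sup>T) (A1 * 0\<^sub>m n 0 + A2 * 0\<^sub>m m 0)
        (0\<^sub>m 0 n * A1\<^sup>T + 0\<^sub>m 0 m * A2\<^sup>T) (0\<^sub>m 0 n * 0\<^sub>m n 0 + 0\<^sub>m 0 m * 0\<^sub>m m 0)"
      unfolding Bt unfolding B_def
      by (rule mult_four_block_mat[OF A1 A2 z1 z2]) (use A1 A2 in auto)
    also have "\<dots> = A1 * A1\<^sup>T + A2 * A2\<^sup>T" by (rule four_block_zero_dims) (use A1 A2 in auto)
    finally show ?thesis unfolding A1A1 A2A2 .
  qed
  have MMi': "R * R\<^sup>T * Minv = 1\<^sub>m k" using MMi unfolding MM_def .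
  have MiM': "Minv * (R * R\<^sup>T) = 1\<^sub>m k" using MiM unfolding MM_def .
  have NNi': "R * R\<^sup>T * L * R * R\<^sup>T * Ninv = 1\<^sub>m k" using NNi unfolding NN_def .
  have NiN': "Ninv * (R * R\<^sup>T * L * R * R\<^sup>T) = 1\<^sub>m k" using NiN unfolding NN_def .
  note hyps = R L B Mi Ni Lsym MMi' MiM' NNi' NiN' Lpd BBt rho kpos qpos km
  have LRW: "L * R * W * R\<^sup>T = \<rho> \<cdot>\<^sub>m (L * (R * R\<^sup>T))"
  proof -
    have LR: "L * R \<in> carrier_mat k m" using L R by simp
    have "L * R * W = \<rho> \<cdot>\<^sub>m (L * R)" unfolding Wdef m_def[symmetric]
      using mult_smult_distrib[OF LR one_carrier_mat, of \<rho>] right_mult_one_mat[OF LR] by simp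
    hence "L * R * W * R\<^sup>T = \<rho> \<cdot>\<^sub>m (L * R * R\<^sup>T)" using mult_smult_assoc_mat[OF LR Rt] by simp
    also have "L * R * R\<^sup>T = L * (R * R\<^sup>T)" by (rule assoc_mult_mat[OF L R Rt])
    finally show ?thesis .
  qed
  have Sig: "Sigma_tilde n es W E \<sigma>w \<sigma>v s = cmat (R\<^sup>T) * minv (s \<cdot>\<^sub>m 1\<^sub>m k + cmat (\<rho> \<cdot>\<^sub>m (L * (R * R\<^sup>T)))) * cmat B" for s
    unfolding Sigma_tilde_def Let_def R_def[symmetric] L_def[symmetric] D_def[symmetric] Eh_def[symmetric]
      Wh_def[symmetric] m_def[symmetric] k_def[symmetric] A1_def[symmetric] A2_def[symmetric] B_def[symmetric] LRW ..
  define \<mu> where "\<mu> = 1 / \<rho>\<^sup>2 * \<sigma>w\<^sup>2 * kap R Ninv + 1 / \<rho> * \<sigma>v\<^sup>2"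
  have re0: "Re (\<i> * complex_of_real \<omega>) = 0" for \<omega> :: real by simp
  have bound: "sigma_max (Sigma_tilde n es W E \<sigma>w \<sigma>v (\<i> * complex_of_real \<omega>)) \<le> sqrt \<mu>" for \<omega>
    unfolding Sig \<mu>_def by (rule sig_bound[OF hyps re0])
  have att: "sigma_max (Sigma_tilde n es W E \<sigma>w \<sigma>v (\<i> * complex_of_real 0)) = sqrt \<mu>"
    unfolding Sig \<mu>_def using sig_att[OF hyps] by simp
  have hinf: "hinf_norm (Sigma_tilde n es W E \<sigma>w \<sigma>v) = sqrt \<mu>"
    unfolding hinf_norm_def
    by (rule cSup_eq_maximum) (use bound att in \<open>auto intro!: image_eqI[where x=0]\<close>)
  have mu0: "\<mu> \<ge> 0" unfolding \<mu>_def using kap_pos[OF hyps] rho by simp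
  have kapeq: "kap R Ninv = sigma_max_real ((R_mat n es)\<^sup>T *
              minv (R_mat n es * (R_mat n es)\<^sup>T * L_es n es E * R_mat n es * (R_mat n es)\<^sup>T) * R_mat n es)"
  proof -
    have "kap R Ninv = sigma_max_real (R\<^sup>T * Ninv * R)" by (rule kap_def[OF hyps])
    thus ?thesis unfolding Ninv_def NN_def R_def L_def .
  qed
  show ?thesis unfolding hinf using mu0 unfolding \<mu>_def kapeq by simp
qed


end
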